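(* Let $W^B$ be a channel from $\mathcal X$ to $\mathcal Y$ and $W^E$ a channel from $\mathcal X$ to a finite set $\mathcal Z$. For any positive integers $L,M$, any reals $C,C'>0$, and any probability distribution $p$ on $\mathcal X$, there exists a wire-tap code $\Phi$ with $|\Phi|=M$ satisfying simultaneously $$\epsilon_B(\Phi)\le 3\min_{0\le s\le1}(ML)^s\sum_y\Big(\mathrm{E}_p\,W^B_x(y)^{1/(1+s)}\Big)^{1+s},$$ $$\epsilon_B(\Phi)\le 3\Big(\mathrm{E}_p\,W^B_x\Big\{y:\tfrac{W^B_x(y)}{W^B_p(y)}\le C'\Big\}+\frac{ML}{C'}\Big),$$ $$I_E(\Phi)\le 3\Big(\eta(\delta_{p,W^E,C})+\delta_{p,W^E,C}\log|\mathcal Z|+\frac{\delta'_{p,W^E,C}}{L}\Big),$$ $$I_E(\Phi)\le 3\min_{-1/2\le t<0}\frac{\log\big(1+L^te^{\phi(t|W^E,p)}\big)}{-t},$$ $$d_E(\Phi)\le 6\Big(2\delta_{p,W^E,C}+\sqrt{\frac{\delta'_{p,W^E,C}}{L}}\Big).$$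
   Context: A channel $W$ from a finite or countable set $\mathcal X$ to a finite or countable set $\mathcal Y$ is a map $x\mapsto W_x$ assigning a probability distribution $W_x$ on $\mathcal Y$; $W_p(y):=\sum_x p(x)W_x(y)$, $W_Q$ likewise for any distribution $Q$ on $\mathcal X$, and $\mathrm{E}_p$ is expectation over $x\sim p$. A wire-tap code for the pair $(W^B,W^E)$ is a triple $\Phi=(M,\{Q_1,\dots,Q_M\},\{\mathcal D_1,\dots,\mathcal D_M\})$ with $Q_i$ probability distributions on $\mathcal X$ and $\mathcal D_1,\dots,\mathcal D_M$ pairwise disjoint subsets of $\mathcal Y$; $|\Phi|:=M$. Its performance quantities: $\epsilon_B(\Phi):=\frac1M\sum_{i=1}^MW^B_{Q_i}(\mathcal D_i^c)$; $I_E(\Phi):=\sum_i\frac1M D(W^E_{Q_i}\|W^E_\Phi)$ with $W^E_\Phi:=\sum_i\frac1M W^E_{Q_i}$; $d_E(\Phi):=\frac{1}{M(M-1)}\sum_{i\neq j}d(W^E_{Q_i},W^E_{Q_j})$, where $d(q,r)=\sum_z|q(z)-r(z)|$ and $D(q\|r)=\sum q\log(q/r)$. Further, $\delta_{p,W,C}:=\sum_x p(x)\sum_{y:\,W_x(y)>CW_p(y)}W_x(y)$, $\delta'_{p,W,C}:=\sum_x p(x)\sum_{y:\,W_x(y)\le CW_p(y),\,W_p(y)>0}\frac{W_x(y)^2}{W_p(y)}$, $\phi(t|W,p):=\log\sum_y\big(\sum_xp(x)W_x(y)^{1/(1+t)}\big)^{1+t}$, $\eta(x):=-x\log x$. *)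

theory Defs
  imports "HOL-Probability.Probability"
begin

text \<open>A wire-tap code of size M is given by \<open>Q :: nat \<Rightarrow> 'x pmf\<close> and
  \<open>D :: nat \<Rightarrow> 'y set\<close>, indices \<open>i < M\<close>; natural logarithms.\<close>

definition out_dist :: "('x \<Rightarrow> 'y pmf) \<Rightarrow> 'x pmf \<Rightarrow> 'y pmf" where
  "out_dist W Q = bind_pmf Q W"

definition is_wiretap_code :: "nat \<Rightarrow> (nat \<Rightarrow> 'x pmf) \<Rightarrow> (nat \<Rightarrow> 'y set) \<Rightarrow> bool" where
  "is_wiretap_code M Q D \<longleftrightarrow> disjoint_family_on D {..<M}"

definition eps_B :: "('x \<Rightarrow> 'y pmf) \<Rightarrow> nat \<Rightarrow> (nat \<Rightarrow> 'x pmf) \<Rightarrow> (nat \<Rightarrow> 'y set) \<Rightarrow> real" where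
  "eps_B WB M Q D = (\<Sum>i<M. measure_pmf.prob (out_dist WB (Q i)) (- D i)) / real M"

definition KL_div :: "('z::finite \<Rightarrow> real) \<Rightarrow> ('z \<Rightarrow> real) \<Rightarrow> real" where
  "KL_div q r = (\<Sum>z\<in>UNIV. if q z = 0 then 0 else q z * ln (q z / r z))"

definition l1_dist :: "('z::finite \<Rightarrow> real) \<Rightarrow> ('z \<Rightarrow> real) \<Rightarrow> real" where
  "l1_dist q r = (\<Sum>z\<in>UNIV. \<bar>q z - r z\<bar>)"

definition code_out_mix :: "('x \<Rightarrow> 'z pmf) \<Rightarrow> nat \<Rightarrow> (nat \<Rightarrow> 'x pmf) \<Rightarrow> 'z \<Rightarrow> real" where
  "code_out_mix WE M Q = (\<lambda>z. (\<Sum>i<M. pmf (out_dist WE (Q i)) z) / real M)"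

definition I_E :: "('x \<Rightarrow> 'z::finite pmf) \<Rightarrow> nat \<Rightarrow> (nat \<Rightarrow> 'x pmf) \<Rightarrow> real" where
  "I_E WE M Q = (\<Sum>i<M. KL_div (pmf (out_dist WE (Q i))) (code_out_mix WE M Q)) / real M"

definition d_E :: "('x \<Rightarrow> 'z::finite pmf) \<Rightarrow> nat \<Rightarrow> (nat \<Rightarrow> 'x pmf) \<Rightarrow> real" where
  "d_E WE M Q = (\<Sum>i<M. \<Sum>j<M. if i \<noteq> j then l1_dist (pmf (out_dist WE (Q i))) (pmf (out_dist WE (Q j))) else 0)
      / (real M * (real M - 1))"

definition delta :: "'x pmf \<Rightarrow> ('x \<Rightarrow> 'z::finite pmf) \<Rightarrow> real \<Rightarrow> real" where
  "delta p W C = measure_pmf.expectation p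
     (\<lambda>x. \<Sum>z\<in>{z. pmf (W x) z > C * pmf (out_dist W p) z}. pmf (W x) z)"

definition delta' :: "'x pmf \<Rightarrow> ('x \<Rightarrow> 'z::finite pmf) \<Rightarrow> real \<Rightarrow> real" where
  "delta' p W C = measure_pmf.expectation p
     (\<lambda>x. \<Sum>z\<in>{z. pmf (W x) z \<le> C * pmf (out_dist W p) z \<and> pmf (out_dist W p) z > 0}.
        (pmf (W x) z)\<^sup>2 / pmf (out_dist W p) z)"

definition phi :: "real \<Rightarrow> ('x \<Rightarrow> 'z::finite pmf) \<Rightarrow> 'x pmf \<Rightarrow> real" where
  "phi t W p = ln (\<Sum>z\<in>UNIV.
     (measure_pmf.expectation p (\<lambda>x. pmf (W x) z powr (1 / (1 + t)))) powr (1 + t))"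

text \<open>\<open>\<Sum>_y (E_p W_x(y)^{1/(1+s)})^{1+s}\<close> over a countable output set, as an
  extended nonnegative real (the series may diverge).\<close>
definition gallager_sum :: "real \<Rightarrow> ('x \<Rightarrow> 'y pmf) \<Rightarrow> 'x pmf \<Rightarrow> ennreal" where
  "gallager_sum s W p = (\<integral>\<^sup>+ y. ennreal
     ((measure_pmf.expectation p (\<lambda>x. pmf (W x) y powr (1 / (1 + s)))) powr (1 + s))
     \<partial>count_space UNIV)"

definition eta :: "real \<Rightarrow> real" where
  "eta x = - x * ln x"

end

theory Submission
  imports Defs
begin

lemma integrable_pmf_bounded:
  fixes f :: "'a \<Rightarrow> real"
  assumes "\<And>x. x \<in> set_pmf M \<Longrightarrow> \<bar>f x\<bar> \<le> B"
  shows "integrable (measure_pmf M) f"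
  by (rule measure_pmf.integrable_const_bound[where B=B]) (auto simp: AE_measure_pmf_iff assms)

lemma exp_bind_bounded:
  fixes f :: "'b \<Rightarrow> real"
  assumes "\<And>y. y \<in> set_pmf (bind_pmf M N) \<Longrightarrow> \<bar>f y\<bar> \<le> B"
  shows "measure_pmf.expectation (bind_pmf M N) f =
         measure_pmf.expectation M (\<lambda>x. measure_pmf.expectation (N x) f)"
proof -
  define g where "g y = (if y \<in> set_pmf (bind_pmf M N) then f y else 0)" for y
  have B: "\<bar>g y\<bar> \<le> max B 0" for y using assms[of y] by (fastforce simp: g_def)
  have e1: "measure_pmf.expectation (bind_pmf M N) f = measure_pmf.expectation (bind_pmf M N) g"
    by (intro integral_cong_AE) (auto simp: AE_measure_pmf_iff g_def)
  have e2: "measure_pmf.expectation (N x) f = measure_pmf.expectation (N x) g" if "x \<in> set_pmf M" for x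
    using that by (intro integral_cong_AE) (auto simp: AE_measure_pmf_iff g_def)
  have "measure_pmf.expectation (bind_pmf M N) g =
         measure_pmf.expectation M (\<lambda>x. measure_pmf.expectation (N x) g)"
    unfolding measure_pmf_bind
    by (rule integral_bind[where K="count_space UNIV" and B="max B 0" and B'=1])
       (auto simp: B measure_pmf.prob_space_axioms prob_space_imp_subprob_space
          intro!: measure_pmf_in_subprob_algebra prob_space.finite_measure measure_pmf.emeasure_le_1)
  also have "\<dots> = measure_pmf.expectation M (\<lambda>x. measure_pmf.expectation (N x) f)"
    by (intro integral_cong_AE) (auto simp: AE_measure_pmf_iff e2)
  finally show ?thesis using e1 by simp
qed



lemma exp_pair_bounded:
  fixes f :: "'a \<times> 'b \<Rightarrow> real"
  assumes "\<And>a b. a \<in> set_pmf A \<Longrightarrow> b \<in> set_pmf B \<Longrightarrow> \<bar>f (a,b)\<bar> \<le> K"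
  shows "measure_pmf.expectation (pair_pmf A B) f =
         measure_pmf.expectation A (\<lambda>a. measure_pmf.expectation B (\<lambda>b. f (a,b)))"
proof -
  have "measure_pmf.expectation (pair_pmf A B) f =
     measure_pmf.expectation A (\<lambda>x. measure_pmf.expectation (bind_pmf B (\<lambda>y. return_pmf (x, y))) f)"
    unfolding pair_pmf_def by (rule exp_bind_bounded[where B=K]) (auto simp: assms)
  also have "\<dots> = measure_pmf.expectation A (\<lambda>a. measure_pmf.expectation B (\<lambda>b. f (a,b)))"
  proof (intro integral_cong_AE AE_pmfI)
    fix a assume a: "a \<in> set_pmf A"
    have "measure_pmf.expectation (bind_pmf B (\<lambda>y. return_pmf (a, y))) f =
      measure_pmf.expectation B (\<lambda>y. measure_pmf.expectation (return_pmf (a, y)) f)"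
      by (rule exp_bind_bounded[where B=K]) (auto simp: assms a)
    then show "measure_pmf.expectation (bind_pmf B (\<lambda>y. return_pmf (a, y))) f =
      measure_pmf.expectation B (\<lambda>b. f (a,b))" by simp
  qed auto
  finally show ?thesis .
qed

lemma exp_swap_bounded:
  fixes f :: "'a \<Rightarrow> 'b \<Rightarrow> real"
  assumes "\<And>a b. a \<in> set_pmf A \<Longrightarrow> b \<in> set_pmf B \<Longrightarrow> \<bar>f a b\<bar> \<le> K"
  shows "measure_pmf.expectation A (\<lambda>a. measure_pmf.expectation B (\<lambda>b. f a b)) =
         measure_pmf.expectation B (\<lambda>b. measure_pmf.expectation A (\<lambda>a. f a b))"
proof -
  have "measure_pmf.expectation A (\<lambda>a. measure_pmf.expectation B (\<lambda>b. f a b)) =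
        measure_pmf.expectation (pair_pmf A B) (\<lambda>(a,b). f a b)"
    by (subst exp_pair_bounded[where K=K]) (auto simp: assms)
  also have "\<dots> = measure_pmf.expectation (pair_pmf B A) (\<lambda>(b,a). f a b)"
    by (subst pair_commute_pmf) (simp add: case_prod_unfold)
  also have "\<dots> = measure_pmf.expectation B (\<lambda>b. measure_pmf.expectation A (\<lambda>a. f a b))"
    by (subst exp_pair_bounded[where K=K]) (auto simp: assms)
  finally show ?thesis .
qed

lemma exp_Pi_split:
  fixes F :: "('i \<Rightarrow> 'a) \<Rightarrow> real"
  assumes I: "finite I" and k: "k \<in> I"
    and bnd: "\<And>g. g \<in> set_pmf (Pi_pmf I d (\<lambda>_. p)) \<Longrightarrow> \<bar>F g\<bar> \<le> K"
  shows "measure_pmf.expectation (Pi_pmf I d (\<lambda>_. p)) F =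
     measure_pmf.expectation p (\<lambda>x. measure_pmf.expectation (Pi_pmf (I - {k}) d (\<lambda>_. p)) (\<lambda>g. F (g(k:=x))))"
proof -
  have eq: "Pi_pmf I d (\<lambda>_. p) = map_pmf (\<lambda>(y,f). f(k:=y)) (pair_pmf p (Pi_pmf (I - {k}) d (\<lambda>_. p)))"
    using Pi_pmf_insert[of "I - {k}" k d "\<lambda>_. p"] I k by (simp add: insert_absorb)
  have "measure_pmf.expectation (Pi_pmf I d (\<lambda>_. p)) F =
     measure_pmf.expectation (pair_pmf p (Pi_pmf (I - {k}) d (\<lambda>_. p))) (\<lambda>(y,f). F (f(k:=y)))"
    by (subst eq) (simp add: case_prod_unfold)
  also have "\<dots> = measure_pmf.expectation p (\<lambda>x. measure_pmf.expectation (Pi_pmf (I - {k}) d (\<lambda>_. p)) (\<lambda>g. F (g(k:=x))))"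
    apply (subst exp_pair_bounded[where K=K])
     defer apply simp
  proof -
    fix a b assume "a \<in> set_pmf p" "b \<in> set_pmf (Pi_pmf (I - {k}) d (\<lambda>_. p))"
    then have "b(k:=a) \<in> set_pmf (Pi_pmf I d (\<lambda>_. p))" by (subst eq) force
    then show "\<bar>(\<lambda>(y,f). F (f(k:=y))) (a,b)\<bar> \<le> K" using bnd by simp
  qed
  finally show ?thesis .
qed

lemma Pi_split_set:
  assumes I: "finite I" and k: "k \<in> I" and x: "x \<in> set_pmf p"
    and g: "g \<in> set_pmf (Pi_pmf (I - {k}) d (\<lambda>_. p))"
  shows "g(k:=x) \<in> set_pmf (Pi_pmf I d (\<lambda>_. p))"
proof -
  have eq: "Pi_pmf I d (\<lambda>_. p) = map_pmf (\<lambda>(y,f). f(k:=y)) (pair_pmf p (Pi_pmf (I - {k}) d (\<lambda>_. p)))"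
    using Pi_pmf_insert[of "I - {k}" k d "\<lambda>_. p"] I k by (simp add: insert_absorb)
  show ?thesis using x g by (subst eq) force
qed

lemma exp_Pi_component:
  fixes h :: "'a \<Rightarrow> real"
  assumes I: "finite I" and j: "j \<in> I"
  shows "measure_pmf.expectation (Pi_pmf I d (\<lambda>_. p)) (\<lambda>g. h (g j)) = measure_pmf.expectation p h"
proof -
  have "measure_pmf.expectation (Pi_pmf I d (\<lambda>_. p)) (\<lambda>g. h (g j)) =
        measure_pmf.expectation (map_pmf (\<lambda>g. g j) (Pi_pmf I d (\<lambda>_. p))) h"
    by simp
  also have "map_pmf (\<lambda>g. g j) (Pi_pmf I d (\<lambda>_. p)) = p"
    using Pi_pmf_component[OF I, of j d "\<lambda>_. p"] j by simp
  finally show ?thesis .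
qed

lemma Pi_set_component:
  assumes I: "finite I" and j: "j \<in> I" and g: "g \<in> set_pmf (Pi_pmf I d (\<lambda>_. p))"
  shows "g j \<in> set_pmf p"
proof -
  have "g j \<in> set_pmf (map_pmf (\<lambda>g. g j) (Pi_pmf I d (\<lambda>_. p)))" using g by auto
  also have "map_pmf (\<lambda>g. g j) (Pi_pmf I d (\<lambda>_. p)) = p"
    using Pi_pmf_component[OF I, of j d "\<lambda>_. p"] j by simp
  finally show ?thesis .
qed

lemma exp_pos_pmf:
  fixes f :: "'a \<Rightarrow> real"
  assumes int: "integrable (measure_pmf P) f" and pos: "\<And>x. x \<in> set_pmf P \<Longrightarrow> f x > 0"
  shows "measure_pmf.expectation P f > 0"
proof -
  have ge: "measure_pmf.expectation P f \<ge> 0"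
    by (intro integral_nonneg_AE AE_pmfI) (auto dest: pos intro: less_imp_le)
  obtain x where x: "x \<in> set_pmf P" using set_pmf_not_empty[of P] by blast
  have "measure_pmf.expectation P f \<noteq> 0"
  proof
    assume "measure_pmf.expectation P f = 0"
    then have "AE x in P. f x = 0" using integral_nonneg_eq_0_iff_AE[OF int] pos
      by (auto simp: AE_measure_pmf_iff intro: less_imp_le)
    then show False using x pos[OF x] by (auto simp: AE_measure_pmf_iff)
  qed
  then show ?thesis using ge by simp
qed

lemma exp_zero_pmf:
  fixes f :: "'a \<Rightarrow> real"
  assumes int: "integrable (measure_pmf P) f" and nn: "\<And>x. x \<in> set_pmf P \<Longrightarrow> f x \<ge> 0"
    and z: "measure_pmf.expectation P f = 0" and x: "x \<in> set_pmf P"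
  shows "f x = 0"
proof -
  have "AE x in P. f x = 0" using integral_nonneg_eq_0_iff_AE[OF int] nn z
    by (auto simp: AE_measure_pmf_iff)
  then show ?thesis using x by (auto simp: AE_measure_pmf_iff)
qed

lemma select3:
  fixes X Y Z :: "'a \<Rightarrow> real"
  assumes iX: "integrable (measure_pmf P) X" and iY: "integrable (measure_pmf P) Y"
    and iZ: "integrable (measure_pmf P) Z"
    and nX: "\<And>x. x \<in> set_pmf P \<Longrightarrow> X x \<ge> 0"
    and nY: "\<And>x. x \<in> set_pmf P \<Longrightarrow> Y x \<ge> 0"
    and nZ: "\<And>x. x \<in> set_pmf P \<Longrightarrow> Z x \<ge> 0"
  shows "\<exists>w\<in>set_pmf P. X w \<le> 3 * measure_pmf.expectation P X \<and>
     Y w \<le> 3 * measure_pmf.expectation P Y \<and> Z w \<le> 3 * measure_pmf.expectation P Z"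
proof (rule ccontr)
  define mX where "mX = measure_pmf.expectation P X"
  define mY where "mY = measure_pmf.expectation P Y"
  define mZ where "mZ = measure_pmf.expectation P Z"
  have mX0: "mX \<ge> 0" unfolding mX_def by (intro integral_nonneg_AE AE_pmfI nX)
  have mY0: "mY \<ge> 0" unfolding mY_def by (intro integral_nonneg_AE AE_pmfI nY)
  have mZ0: "mZ \<ge> 0" unfolding mZ_def by (intro integral_nonneg_AE AE_pmfI nZ)
  define cX where "cX = (if mX > 0 then 1 / mX else 0)"
  define cY where "cY = (if mY > 0 then 1 / mY else 0)"
  define cZ where "cZ = (if mZ > 0 then 1 / mZ else 0)"
  define T where "T w = cX * X w + cY * Y w + cZ * Z w" for w
  have iT: "integrable (measure_pmf P) T" unfolding T_def using iX iY iZ by auto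
  have "measure_pmf.expectation P T = cX * mX + cY * mY + cZ * mZ"
    unfolding T_def using iX iY iZ
    by (simp add: Bochner_Integration.integral_add mX_def mY_def mZ_def)
  also have "\<dots> = (if mX > 0 then 1 else 0) + (if mY > 0 then 1 else 0)
     + (if mZ > 0 then 1 else 0)" by (simp add: cX_def cY_def cZ_def)
  finally have ET: "measure_pmf.expectation P T \<le> 3" by auto
  assume H: "\<not> (\<exists>w\<in>set_pmf P. X w \<le> 3 * measure_pmf.expectation P X \<and>
     Y w \<le> 3 * measure_pmf.expectation P Y \<and> Z w \<le> 3 * measure_pmf.expectation P Z)"
  have "T w - 3 > 0" if w: "w \<in> set_pmf P" for w
  proof -
    have t1: "(if mX > 0 then X w / mX else 0) \<ge> 0" using nX[OF w] mX0 by auto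
    have t2: "(if mY > 0 then Y w / mY else 0) \<ge> 0" using nY[OF w] mY0 by auto
    have t3: "(if mZ > 0 then Z w / mZ else 0) \<ge> 0" using nZ[OF w] mZ0 by auto
    from H w have "X w > 3 * mX \<or> Y w > 3 * mY \<or> Z w > 3 * mZ"
      unfolding mX_def mY_def mZ_def by auto
    then show ?thesis
    proof (elim disjE)
      assume a: "X w > 3 * mX"
      have "mX \<noteq> 0" using exp_zero_pmf[OF iX nX _ w] a mX_def by auto
      then have "mX > 0" using mX0 by auto
      then have "X w / mX > 3" using a by (simp add: field_simps)
      then show ?thesis using t2 t3 \<open>mX > 0\<close> unfolding T_def cX_def cY_def cZ_def by auto
    next
      assume a: "Y w > 3 * mY"
      have "mY \<noteq> 0" using exp_zero_pmf[OF iY nY _ w] a mY_def by auto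
      then have "mY > 0" using mY0 by auto
      then have "Y w / mY > 3" using a by (simp add: field_simps)
      then show ?thesis using t1 t3 \<open>mY > 0\<close> unfolding T_def cX_def cY_def cZ_def by auto
    next
      assume a: "Z w > 3 * mZ"
      have "mZ \<noteq> 0" using exp_zero_pmf[OF iZ nZ _ w] a mZ_def by auto
      then have "mZ > 0" using mZ0 by auto
      then have "Z w / mZ > 3" using a by (simp add: field_simps)
      then show ?thesis using t1 t2 \<open>mZ > 0\<close> unfolding T_def cX_def cY_def cZ_def by auto
    qed
  qed
  then have "measure_pmf.expectation P (\<lambda>w. T w - 3) > 0"
    using iT by (intro exp_pos_pmf) auto
  then show False using ET iT by (simp add: Bochner_Integration.integral_diff)
qed

lemma q_ln_q_bound:
  fixes q :: real assumes "0 \<le> q" "q \<le> 1" shows "q * \<bar>ln q\<bar> \<le> 1"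
proof (cases "q = 0")
  case False
  then have q: "q > 0" using assms by auto
  have "ln q \<le> 0" using assms q by simp
  moreover have "ln (1/q) \<le> 1/q - 1" using q by (intro ln_le_minus_one) simp
  ultimately have "q * \<bar>ln q\<bar> = q * ln (1/q)" using q by (simp add: ln_div)
  also have "\<dots> \<le> q * (1/q - 1)" using \<open>ln (1/q) \<le> 1/q - 1\<close> q by (intro mult_left_mono) auto
  also have "\<dots> \<le> 1" using q assms by (simp add: field_simps)
  finally show ?thesis .
qed simp

lemma ln_tangent:
  fixes y m :: real assumes "y > 0" "m > 0" shows "ln y \<le> ln m + y / m - 1"
proof -
  have "ln (y/m) \<le> y/m - 1" using assms by (intro ln_le_minus_one) simp
  then show ?thesis using assms by (simp add: ln_div)
qed

locale blk =
  fixes W :: "'x \<Rightarrow> 'z::finite pmf" and p :: "'x pmf" and L :: nat and I :: "'i set"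
    and e :: "nat \<Rightarrow> 'i" and d :: 'x
  assumes L: "L > 0" and I: "finite I" and e_inj: "inj_on e {..<L}" and e_I: "e ` {..<L} \<subseteq> I"
begin

definition r :: "'z \<Rightarrow> real" where "r z = pmf (out_dist W p) z"
definition P where "P = Pi_pmf I d (\<lambda>_. p)"
definition P' where "P' k = Pi_pmf (I - {k}) d (\<lambda>_. p)"
definition q :: "('i \<Rightarrow> 'x) \<Rightarrow> 'z \<Rightarrow> real" where
  "q g z = (\<Sum>l<L. pmf (W (g (e l))) z) / real L"

lemma r_exp: "r z = measure_pmf.expectation p (\<lambda>x. pmf (W x) z)"
  unfolding r_def out_dist_def by (simp add: pmf_bind)

lemma r_nonneg: "r z \<ge> 0" by (simp add: r_def)
lemma r_le1: "r z \<le> 1" by (simp add: r_def pmf_le_1)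
lemma r_sum: "(\<Sum>z\<in>UNIV. r z) = 1"
  unfolding r_def by (rule sum_pmf_eq_1) auto

lemma r_pos: "x \<in> set_pmf p \<Longrightarrow> pmf (W x) z > 0 \<Longrightarrow> r z > 0"
  unfolding r_def out_dist_def by (auto simp: pmf_positive_iff set_pmf_iff)

lemma r_zero: "x \<in> set_pmf p \<Longrightarrow> r z = 0 \<Longrightarrow> pmf (W x) z = 0"
  using r_pos[of x z] pmf_nonneg[of "W x" z] by linarith

lemma q_nonneg: "q g z \<ge> 0" unfolding q_def by (intro divide_nonneg_nonneg sum_nonneg) auto
lemma q_le1: "q g z \<le> 1"
proof -
  have "(\<Sum>l<L. pmf (W (g (e l))) z) \<le> (\<Sum>l<L. 1)" by (intro sum_mono) (auto simp: pmf_le_1)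
  then show ?thesis unfolding q_def using L by (simp add: field_simps)
qed
lemma q_sum: "(\<Sum>z\<in>UNIV. q g z) = 1"
proof -
  have "(\<Sum>z\<in>UNIV. q g z) = (\<Sum>l<L. \<Sum>z\<in>UNIV. pmf (W (g (e l))) z) / real L"
    unfolding q_def by (simp add: sum_divide_distrib[symmetric] sum.swap[of _ UNIV])
  also have "\<dots> = 1" using L by (simp add: sum_pmf_eq_1)
  finally show ?thesis .
qed

lemma W_le_q: "l < L \<Longrightarrow> pmf (W (g (e l))) z \<le> real L * q g z"
  unfolding q_def using L
  by (auto intro!: member_le_sum)

lemma q_split:
  assumes l: "l < L"
  shows "q (g(e l := x)) z = (pmf (W x) z + (\<Sum>l'\<in>{..<L}-{l}. pmf (W (g (e l'))) z)) / real L"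
proof -
  have "(\<Sum>l'<L. pmf (W ((g(e l := x)) (e l'))) z) =
        pmf (W x) z + (\<Sum>l'\<in>{..<L}-{l}. pmf (W ((g(e l := x)) (e l'))) z)"
    using l by (subst sum.remove[of _ l]) auto
  also have "(\<Sum>l'\<in>{..<L}-{l}. pmf (W ((g(e l := x)) (e l'))) z) = (\<Sum>l'\<in>{..<L}-{l}. pmf (W (g (e l'))) z)"
  proof (intro sum.cong refl)
    fix l' assume "l' \<in> {..<L}-{l}"
    then have "e l' \<noteq> e l" using e_inj l by (auto dest: inj_onD)
    then show "pmf (W ((g(e l := x)) (e l'))) z = pmf (W (g (e l'))) z" by simp
  qed
  finally show ?thesis unfolding q_def by simp
qed

lemma exp_S:
  assumes l: "l < L"
  shows "measure_pmf.expectation (P' (e l)) (\<lambda>g. \<Sum>l'\<in>{..<L}-{l}. pmf (W (g (e l'))) z) = (real L - 1) * r z"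
proof -
  have "measure_pmf.expectation (P' (e l)) (\<lambda>g. \<Sum>l'\<in>{..<L}-{l}. pmf (W (g (e l'))) z) =
      (\<Sum>l'\<in>{..<L}-{l}. measure_pmf.expectation (P' (e l)) (\<lambda>g. pmf (W (g (e l'))) z))"
    by (rule Bochner_Integration.integral_sum)
       (auto intro!: integrable_pmf_bounded[where B=1] simp: pmf_le_1)
  also have "\<dots> = (\<Sum>l'\<in>{..<L}-{l}. r z)"
  proof (intro sum.cong refl)
    fix l' assume l': "l' \<in> {..<L}-{l}"
    then have "e l' \<noteq> e l" using e_inj l by (auto dest: inj_onD)
    then have "e l' \<in> I - {e l}" using e_I l' by auto
    then show "measure_pmf.expectation (P' (e l)) (\<lambda>g. pmf (W (g (e l'))) z) = r z"
      unfolding P'_def r_exp using I by (subst exp_Pi_component) auto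
  qed
  also have "\<dots> = (real L - 1) * r z" using l by simp
  finally show ?thesis .
qed

end

lemma abs_ln_between:
  fixes y lo hi :: real assumes "0 < lo" "lo \<le> y" "y \<le> hi"
  shows "\<bar>ln y\<bar> \<le> \<bar>ln lo\<bar> + \<bar>ln hi\<bar>"
proof -
  have "ln lo \<le> ln y" "ln y \<le> ln hi" using assms by auto
  then show ?thesis by linarith
qed

context blk begin

definition A :: "real \<Rightarrow> 'z \<Rightarrow> 'x \<Rightarrow> real" where
  "A C z x = (if pmf (W x) z \<le> C * r z \<and> r z > 0 then (pmf (W x) z)\<^sup>2 / r z else 0)"
definition Bf :: "real \<Rightarrow> 'z \<Rightarrow> 'x \<Rightarrow> real" where
  "Bf C z x = (if pmf (W x) z > C * r z then pmf (W x) z else 0)"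

lemma A_nonneg: "A C z x \<ge> 0" unfolding A_def using r_nonneg by auto
lemma Bf_nonneg: "Bf C z x \<ge> 0" unfolding Bf_def by auto
lemma ln_inv_r_nonneg: "ln (1 / r z) \<ge> 0"
  using r_le1[of z] r_nonneg[of z] by (cases "r z = 0") auto

lemma F_bound:
  assumes l: "l < L"
  shows "\<bar>pmf (W (g (e l))) z * ln (q g z / r z)\<bar> \<le> real L + \<bar>ln (r z)\<bar>"
proof -
  define w where "w = pmf (W (g (e l))) z"
  define qq where "qq = q g z"
  have w0: "w \<ge> 0" and wq: "w \<le> real L * qq" and q0: "qq \<ge> 0" and q1: "qq \<le> 1"
    using W_le_q[OF l] q_nonneg q_le1 by (auto simp: w_def qq_def)
  show ?thesis
  proof (cases "qq = 0 \<or> r z = 0")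
    case True
    then have "w * ln (qq / r z) = 0" using w0 wq by auto
    have "0 \<le> real L + \<bar>ln (r z)\<bar>" by simp
    then show ?thesis using \<open>w * ln (qq / r z) = 0\<close> unfolding w_def qq_def by (simp only: abs_zero)
  next
    case False
    then have qp: "qq > 0" and rp: "r z > 0" using q0 r_nonneg[of z] by auto
    have "\<bar>w * ln (qq / r z)\<bar> = w * \<bar>ln qq - ln (r z)\<bar>" using qp rp w0 by (simp add: ln_div abs_mult)
    also have "\<dots> \<le> w * (\<bar>ln qq\<bar> + \<bar>ln (r z)\<bar>)" using w0
      by (intro mult_left_mono) auto
    also have "\<dots> = w * \<bar>ln qq\<bar> + w * \<bar>ln (r z)\<bar>" by (simp add: distrib_left)
    also have "w * \<bar>ln qq\<bar> \<le> real L * (qq * \<bar>ln qq\<bar>)" using wq by (simp add: mult_right_mono mult.assoc[symmetric])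
    also have "real L * (qq * \<bar>ln qq\<bar>) \<le> real L * 1" using q_ln_q_bound[OF q0 q1] by (intro mult_left_mono) auto
    also have "w * \<bar>ln (r z)\<bar> \<le> 1 * \<bar>ln (r z)\<bar>" using pmf_le_1 unfolding w_def by (intro mult_right_mono) auto
    finally show ?thesis unfolding w_def qq_def by simp
  qed
qed


lemma S_bounds:
  assumes l: "l < L"
  shows "0 \<le> (\<Sum>l'\<in>{..<L}-{l}. pmf (W (g (e l'))) z)"
    and "(\<Sum>l'\<in>{..<L}-{l}. pmf (W (g (e l'))) z) \<le> real L"
proof -
  show "0 \<le> (\<Sum>l'\<in>{..<L}-{l}. pmf (W (g (e l'))) z)" by (intro sum_nonneg) auto
  have "(\<Sum>l'\<in>{..<L}-{l}. pmf (W (g (e l'))) z) \<le> (\<Sum>l'\<in>{..<L}-{l}. 1)"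
    by (intro sum_mono) (auto simp: pmf_le_1)
  also have "\<dots> \<le> real L" using l by simp
  finally show "(\<Sum>l'\<in>{..<L}-{l}. pmf (W (g (e l'))) z) \<le> real L" .
qed

lemma w_ln_m_bound:
  assumes x: "x \<in> set_pmf p" and w: "pmf (W x) z > 0"
  shows "pmf (W x) z * ln ((pmf (W x) z + (real L - 1) * r z) / (real L * r z))
     \<le> A C z x / real L + Bf C z x * ln (1 / r z)"
proof -
  define w where "w = pmf (W x) z"
  have rp: "r z > 0" using r_pos[OF x w] .
  have w1: "w \<le> 1" unfolding w_def by (rule pmf_le_1)
  have r1: "r z \<le> 1" by (rule r_le1)
  have Lp: "real L \<ge> 1" using L by simp
  define m where "m = (w + (real L - 1) * r z) / (real L * r z)"
  have mp: "m > 0" unfolding m_def using rp w Lp by (intro divide_pos_pos) (auto simp: w_def intro: add_pos_nonneg)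
  show ?thesis
  proof (cases "w \<le> C * r z")
    case True
    have "ln m \<le> m - 1" using mp by (rule ln_le_minus_one)
    also have "m - 1 = (w - r z) / (real L * r z)" unfolding m_def using rp Lp
      by (simp add: field_simps)
    also have "\<dots> \<le> w / (real L * r z)" using rp Lp by (intro divide_right_mono) auto
    finally have "w * ln m \<le> w * (w / (real L * r z))" using w unfolding w_def by (intro mult_left_mono) auto
    also have "\<dots> = A C z x / real L + Bf C z x * ln (1 / r z)"
      using True rp unfolding A_def Bf_def w_def by (simp add: power2_eq_square field_simps)
    finally show ?thesis unfolding m_def w_def .
  next
    case False
    have "w + (real L - 1) * r z \<le> 1 + (real L - 1) * 1" using w1 r1 Lp
      by (intro add_mono mult_left_mono) auto
    then have "m \<le> real L / (real L * r z)" unfolding m_def using rp Lp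
      by (intro divide_right_mono) auto
    also have "\<dots> = 1 / r z" using Lp by simp
    finally have "ln m \<le> ln (1 / r z)" using mp by (intro ln_mono) auto
    then have "w * ln m \<le> w * ln (1 / r z)" using w unfolding w_def by (intro mult_left_mono) auto
    also have "\<dots> = A C z x / real L + Bf C z x * ln (1 / r z)"
      using False rp unfolding A_def Bf_def w_def by simp
    finally show ?thesis unfolding m_def w_def .
  qed
qed

lemma inner_ln:
  assumes l: "l < L" and x: "x \<in> set_pmf p"
  shows "measure_pmf.expectation (P' (e l)) (\<lambda>g. pmf (W x) z * ln (q (g(e l := x)) z / r z))
     \<le> A C z x / real L + Bf C z x * ln (1 / r z)"
proof (cases "pmf (W x) z = 0")
  case True
  then show ?thesis using A_nonneg[of C z x] Bf_nonneg[of C z x] ln_inv_r_nonneg[of z] by simp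
next
  case False
  define w where "w = pmf (W x) z"
  have w: "w > 0" using False unfolding w_def by (simp add: order_less_le)
  have rp: "r z > 0" using r_pos[OF x] w unfolding w_def by auto
  have Lp: "real L \<ge> 1" using L by simp
  define S where "S g = (\<Sum>l'\<in>{..<L}-{l}. pmf (W (g (e l'))) z)" for g
  define y where "y g = (w + S g) / (real L * r z)" for g
  define m where "m = (w + (real L - 1) * r z) / (real L * r z)"
  have mp: "m > 0" unfolding m_def using rp w Lp by (intro divide_pos_pos) (auto intro: add_pos_nonneg)
  have qy: "q (g(e l := x)) z / r z = y g" for g
    unfolding y_def S_def w_def using q_split[OF l] rp by (simp add: field_simps)
  have S0: "S g \<ge> 0" and SL: "S g \<le> real L" for g unfolding S_def using S_bounds[OF l] by auto
  have ylo: "y g \<ge> w / (real L * r z)" for g unfolding y_def using S0[of g] rp Lp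
    by (intro divide_right_mono) auto
  have yhi: "y g \<le> (w + real L) / (real L * r z)" for g unfolding y_def using SL[of g] rp Lp
    by (intro divide_right_mono) auto
  have lop: "w / (real L * r z) > 0" using w rp Lp by simp
  have ypos: "y g > 0" for g using ylo[of g] lop by linarith
  have bnd: "\<bar>ln (y g)\<bar> \<le> \<bar>ln (w / (real L * r z))\<bar> + \<bar>ln ((w + real L) / (real L * r z))\<bar>" for g
    by (rule abs_ln_between[OF lop ylo yhi])
  have int_ln: "integrable (measure_pmf (P' (e l))) (\<lambda>g. ln (y g))"
    by (rule integrable_pmf_bounded) (rule bnd)
  have int_S: "integrable (measure_pmf (P' (e l))) S"
    by (rule integrable_pmf_bounded[where B="real L"]) (use S0 SL in auto)
  have int_y: "integrable (measure_pmf (P' (e l))) y"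
    unfolding y_def using int_S by auto
  have ES: "measure_pmf.expectation (P' (e l)) S = (real L - 1) * r z"
    unfolding S_def by (rule exp_S[OF l])
  have Ey: "measure_pmf.expectation (P' (e l)) y = m"
    unfolding y_def m_def using int_S ES by (simp add: Bochner_Integration.integral_add)
  have "measure_pmf.expectation (P' (e l)) (\<lambda>g. ln (y g))
      \<le> measure_pmf.expectation (P' (e l)) (\<lambda>g. ln m + y g / m - 1)"
    using int_ln int_y by (intro integral_mono) (auto intro: ln_tangent ypos mp)
  also have "\<dots> = ln m + m / m - 1" using int_y Ey
    by (simp add: Bochner_Integration.integral_diff Bochner_Integration.integral_add)
  also have "\<dots> = ln m" using mp by simp
  finally have Eln: "measure_pmf.expectation (P' (e l)) (\<lambda>g. ln (y g)) \<le> ln m" .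
  have "measure_pmf.expectation (P' (e l)) (\<lambda>g. pmf (W x) z * ln (q (g(e l := x)) z / r z))
      = w * measure_pmf.expectation (P' (e l)) (\<lambda>g. ln (y g))"
    by (simp add: qy w_def)
  also have "\<dots> \<le> w * ln m" using Eln w by (intro mult_left_mono) auto
  also have "\<dots> \<le> A C z x / real L + Bf C z x * ln (1 / r z)"
    using w_ln_m_bound[OF x] w unfolding m_def w_def by auto
  finally show ?thesis .
qed


lemma A_le: "A C z x \<le> (if r z > 0 then 1 / r z else 0)"
proof -
  have "(pmf (W x) z)\<^sup>2 \<le> 1" using pmf_le_1[of "W x" z] by (simp add: power_le_one)
  then show ?thesis unfolding A_def using r_nonneg[of z] by (auto simp: divide_right_mono)
qed

lemma Bf_le: "Bf C z x \<le> pmf (W x) z" unfolding Bf_def by auto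

lemma int_A: "integrable (measure_pmf M) (A C z)"
  by (rule integrable_pmf_bounded[where B="if r z > 0 then 1 / r z else 0"])
     (use A_le A_nonneg in \<open>auto simp: abs_of_nonneg\<close>)

lemma int_Bf: "integrable (measure_pmf M) (Bf C z)"
  by (rule integrable_pmf_bounded[where B=1])
     (metis Bf_le Bf_nonneg pmf_le_1 abs_of_nonneg order_trans)

lemma key_ln:
  assumes l: "l < L"
  shows "measure_pmf.expectation P (\<lambda>g. pmf (W (g (e l))) z * ln (q g z / r z))
     \<le> measure_pmf.expectation p (\<lambda>x. A C z x / real L + Bf C z x * ln (1 / r z))"
proof -
  have elI: "e l \<in> I" using e_I l by auto
  have "measure_pmf.expectation P (\<lambda>g. pmf (W (g (e l))) z * ln (q g z / r z)) =
     measure_pmf.expectation p (\<lambda>x. measure_pmf.expectation (P' (e l))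
        (\<lambda>g. pmf (W ((g(e l := x)) (e l))) z * ln (q (g(e l := x)) z / r z)))"
    unfolding P_def P'_def
    by (rule exp_Pi_split[OF I elI, where K="real L + \<bar>ln (r z)\<bar>"]) (rule F_bound[OF l])
  also have "\<dots> = measure_pmf.expectation p (\<lambda>x. measure_pmf.expectation (P' (e l))
        (\<lambda>g. pmf (W x) z * ln (q (g(e l := x)) z / r z)))" by simp
  also have "\<dots> \<le> measure_pmf.expectation p (\<lambda>x. A C z x / real L + Bf C z x * ln (1 / r z))"
  proof (rule integral_mono_AE')
    show "integrable (measure_pmf p) (\<lambda>x. A C z x / real L + Bf C z x * ln (1 / r z))"
      using int_A int_Bf by auto
    show "AE x in measure_pmf p. measure_pmf.expectation (P' (e l))
        (\<lambda>g. pmf (W x) z * ln (q (g(e l := x)) z / r z)) \<le> A C z x / real L + Bf C z x * ln (1 / r z)"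
      by (rule AE_pmfI) (rule inner_ln[OF l])
    show "AE x in measure_pmf p. 0 \<le> A C z x / real L + Bf C z x * ln (1 / r z)"
      using A_nonneg Bf_nonneg ln_inv_r_nonneg by (intro AE_pmfI) auto
  qed
  finally show ?thesis .
qed

end

lemma eta_term:
  fixes b dl n :: real assumes b: "b \<ge> 0" and dl: "dl > 0" and n: "n > 0"
  shows "eta b \<le> - b * ln dl + b * ln n + dl / n - b"
proof (cases "b = 0")
  case True then show ?thesis using dl n by (simp add: eta_def)
next
  case False
  then have bp: "b > 0" using b by simp
  have "ln (dl / (n * b)) \<le> dl / (n * b) - 1" using bp dl n by (intro ln_le_minus_one) simp
  then have "b * ln (dl / (n * b)) \<le> b * (dl / (n * b) - 1)" using bp by (intro mult_left_mono) auto
  moreover have "ln (dl / (n * b)) = ln dl - ln n - ln b" using bp dl n by (simp add: ln_div ln_mult)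
  moreover have "b * (dl / (n * b) - 1) = dl / n - b" using bp n by (simp add: field_simps)
  ultimately have "b * (ln dl - ln n - ln b) \<le> dl / n - b" by simp
  then show ?thesis unfolding eta_def by (simp add: algebra_simps)
qed

lemma entropy_bound:
  fixes b :: "'a \<Rightarrow> real"
  assumes S: "finite S" "S \<noteq> {}" and b: "\<And>z. z \<in> S \<Longrightarrow> b z \<ge> 0"
  shows "(\<Sum>z\<in>S. eta (b z)) \<le> eta (\<Sum>z\<in>S. b z) + (\<Sum>z\<in>S. b z) * ln (real (card S))"
proof -
  define dl where "dl = (\<Sum>z\<in>S. b z)"
  define n where "n = real (card S)"
  have n: "n > 0" using S by (simp add: n_def card_gt_0_iff)
  show ?thesis
  proof (cases "dl = 0")
    case True
    then have "\<forall>z\<in>S. b z = 0" using sum_nonneg_eq_0_iff[OF S(1)] b unfolding dl_def by blast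
    then show ?thesis by (simp add: eta_def)
  next
    case False
    then have dl: "dl > 0" unfolding dl_def using sum_nonneg[of S b] b by force
    have "(\<Sum>z\<in>S. eta (b z)) \<le> (\<Sum>z\<in>S. - b z * ln dl + b z * ln n + dl / n - b z)"
      by (intro sum_mono eta_term b dl n)
    also have "\<dots> = - dl * ln dl + dl * ln n + n * (dl / n) - dl"
      by (simp add: sum.distrib sum_subtractf sum_distrib_right[symmetric] dl_def n_def)
    also have "\<dots> = eta dl + dl * ln n" using n by (simp add: eta_def)
    finally show ?thesis unfolding dl_def n_def .
  qed
qed

lemma b_ln_le_eta:
  fixes b r :: real assumes "0 \<le> b" "b \<le> r" shows "b * ln (1 / r) \<le> eta b"
proof (cases "b = 0")
  case True then show ?thesis by (simp add: eta_def)
next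
  case False
  then have "b > 0" using assms by simp
  then have "ln (1 / r) \<le> ln (1 / b)" using assms by (intro ln_mono) (auto simp: field_simps)
  then have "b * ln (1 / r) \<le> b * ln (1 / b)" using \<open>b > 0\<close> by (intro mult_left_mono) auto
  also have "\<dots> = eta b" using \<open>b > 0\<close> by (simp add: eta_def ln_div)
  finally show ?thesis .
qed

context blk begin

lemma delta_eq: "delta p W C = (\<Sum>z\<in>UNIV. measure_pmf.expectation p (Bf C z))"
proof -
  have "delta p W C = measure_pmf.expectation p (\<lambda>x. \<Sum>z\<in>UNIV. Bf C z x)"
    unfolding delta_def Bf_def r_def[symmetric]
    by (intro Bochner_Integration.integral_cong refl) (simp add: sum.If_cases)
  also have "\<dots> = (\<Sum>z\<in>UNIV. measure_pmf.expectation p (Bf C z))"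
    by (rule Bochner_Integration.integral_sum) (rule int_Bf)
  finally show ?thesis .
qed

lemma delta'_eq: "delta' p W C = (\<Sum>z\<in>UNIV. measure_pmf.expectation p (A C z))"
proof -
  have "delta' p W C = measure_pmf.expectation p (\<lambda>x. \<Sum>z\<in>UNIV. A C z x)"
    unfolding delta'_def A_def r_def[symmetric]
    by (intro Bochner_Integration.integral_cong refl) (simp add: sum.If_cases)
  also have "\<dots> = (\<Sum>z\<in>UNIV. measure_pmf.expectation p (A C z))"
    by (rule Bochner_Integration.integral_sum) (rule int_A)
  finally show ?thesis .
qed

lemma E_Bf_nonneg: "measure_pmf.expectation p (Bf C z) \<ge> 0"
  by (intro integral_nonneg_AE AE_pmfI Bf_nonneg)

lemma E_Bf_le: "measure_pmf.expectation p (Bf C z) \<le> r z"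
  unfolding r_exp
  by (intro integral_mono int_Bf Bf_le integrable_pmf_bounded[where B=1]) (auto simp: pmf_le_1)

lemma E_A_nonneg: "measure_pmf.expectation p (A C z) \<ge> 0"
  by (intro integral_nonneg_AE AE_pmfI A_nonneg)

lemma KL_expand:
  "KL_div (q g) r = (\<Sum>z\<in>UNIV. (\<Sum>l<L. pmf (W (g (e l))) z * ln (q g z / r z)) / real L)"
proof -
  have "(if q g z = 0 then 0 else q g z * ln (q g z / r z)) =
        (\<Sum>l<L. pmf (W (g (e l))) z * ln (q g z / r z)) / real L" for z
    by (simp add: q_def sum_distrib_right[symmetric])
  then show ?thesis unfolding KL_div_def by simp
qed

lemma KL_exp_bound:
  "measure_pmf.expectation P (\<lambda>g. KL_div (q g) r) \<le>
     eta (delta p W C) + delta p W C * ln (real CARD('z)) + delta' p W C / real L"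
proof -
  define h where "h z x = A C z x / real L + Bf C z x * ln (1 / r z)" for z x
  have intF: "integrable (measure_pmf P) (\<lambda>g. pmf (W (g (e l))) z * ln (q g z / r z))" if "l < L" for l z
    by (rule integrable_pmf_bounded[where B="real L + \<bar>ln (r z)\<bar>"]) (rule F_bound[OF that])
  have "measure_pmf.expectation P (\<lambda>g. KL_div (q g) r) =
     (\<Sum>z\<in>UNIV. (\<Sum>l<L. measure_pmf.expectation P (\<lambda>g. pmf (W (g (e l))) z * ln (q g z / r z))) / real L)"
    unfolding KL_expand
  proof (subst Bochner_Integration.integral_sum)
    show "integrable (measure_pmf P) (\<lambda>g. (\<Sum>l<L. pmf (W (g (e l))) z * ln (q g z / r z)) / real L)" for z
      using intF by (intro integrable_divide integrable_sum) auto
    show "(\<Sum>z\<in>UNIV. measure_pmf.expectation P (\<lambda>g. (\<Sum>l<L. pmf (W (g (e l))) z * ln (q g z / r z)) / real L)) =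
     (\<Sum>z\<in>UNIV. (\<Sum>l<L. measure_pmf.expectation P (\<lambda>g. pmf (W (g (e l))) z * ln (q g z / r z))) / real L)"
      using intF by (intro sum.cong refl) (simp add: Bochner_Integration.integral_sum)
  qed
  also have "\<dots> \<le> (\<Sum>z\<in>UNIV. (\<Sum>l<L. measure_pmf.expectation p (h z)) / real L)"
    unfolding h_def by (intro sum_mono divide_right_mono key_ln) auto
  also have "\<dots> = (\<Sum>z\<in>UNIV. measure_pmf.expectation p (h z))" using L by simp
  also have "\<dots> = (\<Sum>z\<in>UNIV. measure_pmf.expectation p (A C z) / real L
        + measure_pmf.expectation p (Bf C z) * ln (1 / r z))"
    unfolding h_def using int_A int_Bf by (simp add: Bochner_Integration.integral_add)
  also have "\<dots> \<le> (\<Sum>z\<in>UNIV. measure_pmf.expectation p (A C z) / real L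
        + eta (measure_pmf.expectation p (Bf C z)))"
    by (intro sum_mono add_left_mono b_ln_le_eta E_Bf_nonneg E_Bf_le)
  also have "\<dots> = delta' p W C / real L + (\<Sum>z\<in>UNIV. eta (measure_pmf.expectation p (Bf C z)))"
    by (simp add: sum.distrib delta'_eq sum_divide_distrib)
  also have "\<dots> \<le> delta' p W C / real L + (eta (delta p W C) + delta p W C * ln (real CARD('z)))"
    unfolding delta_eq by (intro add_left_mono entropy_bound E_Bf_nonneg) auto
  finally show ?thesis by simp
qed

end

lemma powr_ge_self:
  fixes t s :: real assumes "0 \<le> t" "t \<le> 1" "0 \<le> s" "s \<le> 1"
  shows "t \<le> t powr s"
proof (cases "t = 0")
  case False
  then have "t > 0" using assms by simp
  have "t powr 1 \<le> t powr s" using \<open>t > 0\<close> assms by (intro powr_mono') auto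
  then show ?thesis using \<open>t > 0\<close> by simp
qed simp

lemma powr_subadd:
  fixes a b s :: real assumes a: "0 \<le> a" and b: "0 \<le> b" and s: "0 \<le> s" "s \<le> 1"
  shows "(a + b) powr s \<le> a powr s + b powr s"
proof (cases "a + b = 0")
  case True then show ?thesis using a b by simp
next
  case False
  define c where "c = a + b"
  have c: "c > 0" using False a b by (simp add: c_def)
  have ac: "a = c * (a / c)" and bc: "b = c * (b / c)" using c by auto
  have "a / c \<le> (a / c) powr s" using a b c s by (intro powr_ge_self) (auto simp: c_def field_simps)
  moreover have "b / c \<le> (b / c) powr s" using a b c s by (intro powr_ge_self) (auto simp: c_def field_simps)
  ultimately have "c powr s * (a / c + b / c) \<le> c powr s * ((a / c) powr s + (b / c) powr s)"
    by (intro mult_left_mono) auto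
  also have "\<dots> = (c * (a / c)) powr s + (c * (b / c)) powr s"
    using a b c by (simp add: powr_mult[symmetric] distrib_left)
  also have "\<dots> = a powr s + b powr s" using c by simp
  finally show ?thesis using c by (simp add: c_def add_divide_distrib[symmetric])
qed

lemma jensen_powr:
  fixes Y :: "'a \<Rightarrow> real"
  assumes Y0: "\<And>x. x \<in> set_pmf M \<Longrightarrow> Y x \<ge> 0" and YB: "\<And>x. x \<in> set_pmf M \<Longrightarrow> Y x \<le> B"
    and s: "0 < s" "s < 1"
  shows "measure_pmf.expectation M (\<lambda>x. Y x powr s) \<le> (measure_pmf.expectation M Y) powr s"
proof -
  define m where "m = measure_pmf.expectation M Y"
  have intY: "integrable (measure_pmf M) Y"
    by (rule integrable_pmf_bounded[where B=B]) (use Y0 YB in auto)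
  have m0: "m \<ge> 0" unfolding m_def by (intro integral_nonneg_AE AE_pmfI Y0)
  show ?thesis
  proof (cases "m = 0")
    case True
    have "Y x = 0" if "x \<in> set_pmf M" for x using exp_zero_pmf[OF intY Y0 _ that] True m_def by auto
    then have "measure_pmf.expectation M (\<lambda>x. Y x powr s) = measure_pmf.expectation M (\<lambda>x. 0)"
      by (intro integral_cong_AE) (auto simp: AE_measure_pmf_iff)
    then show ?thesis by (simp add: m_def[symmetric] True)
  next
    case False
    then have mp: "m > 0" using m0 by simp
    have pt: "Y x powr s \<le> (s * Y x + (1 - s) * m) / m powr (1 - s)" if x: "x \<in> set_pmf M" for x
    proof (cases "Y x = 0")
      case True then show ?thesis using mp s by simp
    next
      case False
      then have Yp: "Y x > 0" using Y0[OF x] by simp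
      have "Y x powr s * m powr (1 - s) \<le> s * Y x + (1 - s) * m"
        using Youngs_inequality_0[of s "1 - s" "Y x" m] s Yp mp by simp
      then show ?thesis using mp by (simp add: field_simps)
    qed
    have intP: "integrable (measure_pmf M) (\<lambda>x. Y x powr s)"
    proof (rule integrable_pmf_bounded[where B="max B 0 powr s"])
      fix x assume x: "x \<in> set_pmf M"
      have "Y x powr s \<le> max B 0 powr s" using Y0[OF x] YB[OF x] s by (intro powr_mono2) auto
      then show "\<bar>Y x powr s\<bar> \<le> max B 0 powr s" by simp
    qed
    have "measure_pmf.expectation M (\<lambda>x. Y x powr s) \<le>
          measure_pmf.expectation M (\<lambda>x. (s * Y x + (1 - s) * m) / m powr (1 - s))"
      using intP intY by (intro integral_mono_AE AE_pmfI pt) auto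
    also have "\<dots> = (s * m + (1 - s) * m) / m powr (1 - s)"
      using intY by (simp add: m_def)
    also have "\<dots> = m powr s" using mp by (simp add: field_simps powr_diff)
    finally show ?thesis unfolding m_def .
  qed
qed


lemma powr_le1: fixes a p :: real assumes "0 \<le> a" "a \<le> 1" "p \<ge> 0" shows "a powr p \<le> 1"
  using powr_mono2[of p a 1] assms by simp

lemma holder_interp:
  fixes a :: "'a \<Rightarrow> real"
  assumes a0: "\<And>x. x \<in> set_pmf M \<Longrightarrow> a x \<ge> 0" and a1: "\<And>x. x \<in> set_pmf M \<Longrightarrow> a x \<le> 1"
    and s: "0 < s" "s < 1"
  shows "measure_pmf.expectation M (\<lambda>x. a x powr (1 + s)) * (measure_pmf.expectation M a) powr (- s)
     \<le> (measure_pmf.expectation M (\<lambda>x. a x powr (1 / (1 - s)))) powr (1 - s)"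
proof -
  define A where "A = measure_pmf.expectation M a"
  define B where "B = measure_pmf.expectation M (\<lambda>x. a x powr (1 / (1 - s)))"
  define E1 where "E1 = measure_pmf.expectation M (\<lambda>x. a x powr (1 + s))"
  have inta: "integrable (measure_pmf M) a"
    by (rule integrable_pmf_bounded[where B=1]) (use a0 a1 in auto)
  have intB: "integrable (measure_pmf M) (\<lambda>x. a x powr (1 / (1 - s)))"
    by (rule integrable_pmf_bounded[where B=1]) (use a0 a1 s in \<open>auto intro!: powr_le1\<close>)
  have int1: "integrable (measure_pmf M) (\<lambda>x. a x powr (1 + s))"
    by (rule integrable_pmf_bounded[where B=1]) (use a0 a1 s in \<open>auto intro!: powr_le1\<close>)
  have A0: "A \<ge> 0" unfolding A_def by (intro integral_nonneg_AE AE_pmfI a0)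
  have B0: "B \<ge> 0" unfolding B_def by (intro integral_nonneg_AE AE_pmfI) auto
  have E10: "E1 \<ge> 0" unfolding E1_def by (intro integral_nonneg_AE AE_pmfI) auto
  show ?thesis
  proof (cases "A = 0")
    case True then show ?thesis using B0 by (simp add: A_def[symmetric] B_def[symmetric])
  next
    case False
    then have Ap: "A > 0" using A0 by simp
    have Bp: "B > 0"
    proof (rule ccontr)
      assume "\<not> B > 0"
      then have "B = 0" using B0 by simp
      then have "a x powr (1 / (1 - s)) = 0" if "x \<in> set_pmf M" for x
        using exp_zero_pmf[OF intB _ _ that] B_def by auto
      then have "a x = 0" if "x \<in> set_pmf M" for x using that by simp
      then have "A = measure_pmf.expectation M (\<lambda>x. 0)" unfolding A_def
        by (intro integral_cong_AE) (auto simp: AE_measure_pmf_iff)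
      then show False using Ap by simp
    qed
    define K where "K = A powr s * B powr (1 - s)"
    have Kp: "K > 0" using Ap Bp by (simp add: K_def)
    have pt: "a x powr (1 + s) / K \<le> s * (a x / A) + (1 - s) * (a x powr (1 / (1 - s)) / B)"
      if x: "x \<in> set_pmf M" for x
    proof (cases "a x = 0")
      case True then show ?thesis using Kp by simp
    next
      case False
      then have axp: "a x > 0" using a0[OF x] by simp
      have "(a x / A) powr s * (a x powr (1 / (1 - s)) / B) powr (1 - s)
            \<le> s * (a x / A) + (1 - s) * (a x powr (1 / (1 - s)) / B)"
        using Youngs_inequality_0[of s "1 - s" "a x / A" "a x powr (1 / (1 - s)) / B"] s axp Ap Bp by simp
      moreover have "(a x / A) powr s * (a x powr (1 / (1 - s)) / B) powr (1 - s) = a x powr (1 + s) / K"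
      proof -
        have "(a x powr (1 / (1 - s))) powr (1 - s) = a x" using s axp by (simp add: powr_powr)
        then have "(a x / A) powr s * (a x powr (1 / (1 - s)) / B) powr (1 - s) = (a x powr s / A powr s) * (a x / B powr (1 - s))"
          using axp Ap Bp by (simp add: powr_divide)
        also have "\<dots> = a x powr (1 + s) / K" using axp by (simp add: K_def powr_add field_simps)
        finally show ?thesis .
      qed
      ultimately show ?thesis by simp
    qed
    have "E1 / K = measure_pmf.expectation M (\<lambda>x. a x powr (1 + s) / K)" unfolding E1_def by simp
    also have "\<dots> \<le> measure_pmf.expectation M (\<lambda>x. s * (a x / A) + (1 - s) * (a x powr (1 / (1 - s)) / B))"
      using int1 inta intB by (intro integral_mono_AE AE_pmfI pt) auto
    also have "\<dots> = s * (A / A) + (1 - s) * (B / B)"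
      using inta intB by (simp add: A_def B_def)
    also have "\<dots> = 1" using Ap Bp by simp
    finally have "E1 \<le> K" using Kp by (simp add: field_simps)
    then have "E1 * A powr (- s) \<le> K * A powr (- s)" by (intro mult_right_mono) auto
    also have "K * A powr (- s) = B powr (1 - s)" using Ap by (simp add: K_def powr_minus field_simps)
    finally show ?thesis by (simp add: E1_def A_def B_def)
  qed
qed

lemma gibbs:
  fixes qq rr :: "'z::finite \<Rightarrow> real"
  assumes q0: "\<And>z. qq z \<ge> 0" and qs: "(\<Sum>z\<in>UNIV. qq z) = 1"
    and r0: "\<And>z. rr z \<ge> 0" and rs: "(\<Sum>z\<in>UNIV. rr z) \<le> 1"
    and supp: "\<And>z. qq z > 0 \<Longrightarrow> rr z > 0"
  shows "KL_div qq rr \<ge> 0"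
proof -
  have pt: "qq z - rr z \<le> (if qq z = 0 then 0 else qq z * ln (qq z / rr z))" for z
  proof (cases "qq z = 0")
    case True then show ?thesis using r0[of z] by simp
  next
    case False
    then have qp: "qq z > 0" using q0[of z] by simp
    then have rp: "rr z > 0" by (rule supp)
    have "ln (rr z / qq z) \<le> rr z / qq z - 1" using qp rp by (intro ln_le_minus_one) simp
    moreover have "ln (qq z / rr z) = - ln (rr z / qq z)" using qp rp by (simp add: ln_div)
    ultimately have "1 - rr z / qq z \<le> ln (qq z / rr z)" by simp
    then have "qq z * (1 - rr z / qq z) \<le> qq z * ln (qq z / rr z)" using qp by (intro mult_left_mono) auto
    moreover have "qq z * (1 - rr z / qq z) = qq z - rr z" using qp by (simp add: field_simps)
    ultimately show ?thesis using qp by simp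
  qed
  have "0 \<le> (\<Sum>z\<in>UNIV. qq z - rr z)" using qs rs by (simp add: sum_subtractf)
  also have "\<dots> \<le> KL_div qq rr" unfolding KL_div_def by (intro sum_mono pt)
  finally show ?thesis .
qed

lemma renyi:
  fixes qq rr :: "'z::finite \<Rightarrow> real"
  assumes q0: "\<And>z. qq z \<ge> 0" and qs: "(\<Sum>z\<in>UNIV. qq z) = 1"
    and r0: "\<And>z. rr z \<ge> 0"
    and supp: "\<And>z. qq z > 0 \<Longrightarrow> rr z > 0" and s: "s > 0"
  shows "s * KL_div qq rr \<le> ln (\<Sum>z\<in>UNIV. qq z powr (1 + s) * rr z powr (- s))"
    and "(\<Sum>z\<in>UNIV. qq z powr (1 + s) * rr z powr (- s)) > 0"
proof -
  define X where "X = (\<Sum>z\<in>UNIV. qq z powr (1 + s) * rr z powr (- s))"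
  obtain z0 where z0: "qq z0 > 0"
  proof (rule ccontr)
    assume "\<not> thesis"
    with that have "\<forall>z. qq z = 0" using q0 by (metis order_less_le)
    then show False using qs by simp
  qed
  have Xp: "X > 0"
  proof -
    have "0 < qq z0 powr (1 + s) * rr z0 powr (- s)" using z0 supp[OF z0] by simp
    also have "\<dots> \<le> X" unfolding X_def
      by (rule member_le_sum) (auto intro!: mult_nonneg_nonneg simp: q0 r0)
    finally show ?thesis .
  qed
  then show "X > 0" .
  have pt: "s * (if qq z = 0 then 0 else qq z * ln (qq z / rr z)) \<le>
        qq z * ln X + qq z powr (1 + s) * rr z powr (- s) / X - qq z" for z
  proof (cases "qq z = 0")
    case True then show ?thesis by simp
  next
    case False
    then have qp: "qq z > 0" using q0[of z] by simp
    then have rp: "rr z > 0" by (rule supp)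
    define u where "u = (qq z / rr z) powr s"
    have up: "u > 0" using qp rp by (simp add: u_def)
    have "ln u \<le> ln X + u / X - 1" by (rule ln_tangent[OF up Xp])
    then have "qq z * ln u \<le> qq z * (ln X + u / X - 1)" using qp by (intro mult_left_mono) auto
    moreover have "ln u = s * ln (qq z / rr z)" using qp rp by (simp add: u_def ln_powr)
    moreover have "qq z * u = qq z powr (1 + s) * rr z powr (- s)"
      using qp rp by (simp add: u_def powr_divide powr_add powr_minus field_simps)
    ultimately show ?thesis using qp by (simp add: field_simps)
  qed
  have "s * KL_div qq rr \<le> (\<Sum>z\<in>UNIV. qq z * ln X + qq z powr (1 + s) * rr z powr (- s) / X - qq z)"
    unfolding KL_div_def sum_distrib_left by (intro sum_mono pt)
  also have "\<dots> = ln X * (\<Sum>z\<in>UNIV. qq z) + X / X - (\<Sum>z\<in>UNIV. qq z)"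
    by (simp add: sum.distrib sum_subtractf sum_distrib_right[symmetric] sum_divide_distrib[symmetric] X_def mult.commute)
  also have "\<dots> = ln X" using qs Xp by simp
  finally show "s * KL_div qq rr \<le> ln X" .
qed

context blk begin

lemma q_supp:
  assumes g: "g \<in> set_pmf P" and qp: "q g z > 0"
  shows "r z > 0"
proof -
  have "(\<Sum>l<L. pmf (W (g (e l))) z) > 0" using qp L unfolding q_def by (simp add: zero_less_divide_iff)
  then obtain l where l: "l < L" and w: "pmf (W (g (e l))) z > 0"
    by (metis (no_types, lifting) lessThan_iff less_irrefl sum_pos2 sum.neutral not_less_iff_gr_or_eq pmf_nonneg order_le_less)
  have "g (e l) \<in> set_pmf p" using Pi_set_component[OF I _ g[unfolded P_def]] e_I l by auto
  then show ?thesis using r_pos w by auto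
qed

lemma inner_pow:
  assumes l: "l < L" and x: "x \<in> set_pmf p" and s: "0 < s" "s < 1"
  shows "measure_pmf.expectation (P' (e l)) (\<lambda>g. pmf (W x) z * q (g(e l := x)) z powr s)
     \<le> pmf (W x) z * ((pmf (W x) z / real L) powr s + r z powr s)"
proof -
  define w where "w = pmf (W x) z"
  have w0: "w \<ge> 0" by (simp add: w_def)
  have Lp: "real L \<ge> 1" using L by simp
  define S where "S g = (\<Sum>l'\<in>{..<L}-{l}. pmf (W (g (e l'))) z)" for g
  have S0: "S g \<ge> 0" and SL: "S g \<le> real L" for g unfolding S_def using S_bounds[OF l] by auto
  have qs: "q (g(e l := x)) z = w / real L + S g / real L" for g
    unfolding S_def w_def using q_split[OF l] by (simp add: add_divide_distrib)
  have intS: "integrable (measure_pmf (P' (e l))) (\<lambda>g. (S g / real L) powr s)"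
  proof (rule integrable_pmf_bounded[where B=1])
    fix g show "\<bar>(S g / real L) powr s\<bar> \<le> 1" using S0[of g] SL[of g] Lp s
      by (simp add: powr_le1 divide_le_eq_1)
  qed
  have int1: "integrable (measure_pmf (P' (e l))) (\<lambda>g. w * q (g(e l := x)) z powr s)"
  proof (rule integrable_pmf_bounded[where B=1])
    fix g have "q (g(e l := x)) z powr s \<le> 1" using q_nonneg q_le1 s by (intro powr_le1) auto
    moreover have "w \<le> 1" by (simp add: w_def pmf_le_1)
    ultimately show "\<bar>w * q (g(e l := x)) z powr s\<bar> \<le> 1" using w0 by (simp add: abs_mult mult_le_one)
  qed
  have "measure_pmf.expectation (P' (e l)) (\<lambda>g. w * q (g(e l := x)) z powr s)
     \<le> measure_pmf.expectation (P' (e l)) (\<lambda>g. w * ((w / real L) powr s + (S g / real L) powr s))"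
  proof (intro integral_mono int1)
    show "integrable (measure_pmf (P' (e l))) (\<lambda>g. w * ((w / real L) powr s + (S g / real L) powr s))"
      using intS by auto
    fix g show "w * q (g(e l := x)) z powr s \<le> w * ((w / real L) powr s + (S g / real L) powr s)"
      unfolding qs using w0 S0[of g] s Lp by (intro mult_left_mono powr_subadd) auto
  qed
  also have "\<dots> = w * ((w / real L) powr s + measure_pmf.expectation (P' (e l)) (\<lambda>g. (S g / real L) powr s))"
    using intS by simp
  finally have st1: "measure_pmf.expectation (P' (e l)) (\<lambda>g. w * q (g(e l := x)) z powr s) \<le>
     w * ((w / real L) powr s + measure_pmf.expectation (P' (e l)) (\<lambda>g. (S g / real L) powr s))" .
  have "measure_pmf.expectation (P' (e l)) (\<lambda>g. (S g / real L) powr s)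
      \<le> (measure_pmf.expectation (P' (e l)) (\<lambda>g. S g / real L)) powr s"
    by (rule jensen_powr[where B=1]) (use S0 SL Lp s in \<open>auto simp: divide_le_eq_1\<close>)
  also have "measure_pmf.expectation (P' (e l)) (\<lambda>g. S g / real L) = (real L - 1) * r z / real L"
    unfolding S_def using exp_S[OF l] by simp
  also have "((real L - 1) * r z / real L) powr s \<le> r z powr s"
  proof (rule powr_mono2)
    show "0 \<le> (real L - 1) * r z / real L" using Lp r_nonneg[of z] by simp
    show "(real L - 1) * r z / real L \<le> r z" using Lp r_nonneg[of z] by (simp add: field_simps)
  qed (use s in auto)
  finally have st2: "measure_pmf.expectation (P' (e l)) (\<lambda>g. (S g / real L) powr s) \<le> r z powr s" .
  have "measure_pmf.expectation (P' (e l)) (\<lambda>g. w * q (g(e l := x)) z powr s) \<le>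
     w * ((w / real L) powr s + r z powr s)"
    using st1 st2 w0 by (meson add_left_mono mult_left_mono order_trans)
  then show ?thesis unfolding w_def .
qed


lemma W_pow_eq: fixes w :: real assumes "w \<ge> 0" "0 < s"
  shows "w * ((w / real L) powr s + r z powr s) = real L powr (- s) * w powr (1 + s) + w * r z powr s"
proof -
  have "w * (w / real L) powr s = real L powr (- s) * w powr (1 + s)"
    using assms L by (cases "w = 0") (simp_all add: powr_divide powr_add powr_minus field_simps)
  then show ?thesis by (simp add: distrib_left)
qed

lemma key_pow:
  assumes l: "l < L" and s: "0 < s" "s < 1"
  shows "measure_pmf.expectation P (\<lambda>g. pmf (W (g (e l))) z * q g z powr s)
     \<le> real L powr (- s) * measure_pmf.expectation p (\<lambda>x. pmf (W x) z powr (1 + s)) + r z powr (1 + s)"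
proof -
  have elI: "e l \<in> I" using e_I l by auto
  have bnd: "\<bar>pmf (W (g (e l))) z * q g z powr s\<bar> \<le> 1" for g
  proof -
    have "q g z powr s \<le> 1" using q_nonneg q_le1 s by (intro powr_le1) auto
    then show ?thesis using pmf_le_1[of "W (g (e l))" z] by (simp add: abs_mult mult_le_one)
  qed
  define U where "U x = pmf (W x) z * ((pmf (W x) z / real L) powr s + r z powr s)" for x
  have U0: "U x \<ge> 0" for x unfolding U_def by auto
  have intW1: "integrable (measure_pmf p) (\<lambda>x. pmf (W x) z powr (1 + s))"
    by (rule integrable_pmf_bounded[where B=1]) (use s in \<open>auto intro!: powr_le1 simp: pmf_le_1\<close>)
  have intW: "integrable (measure_pmf p) (\<lambda>x. pmf (W x) z)"
    by (rule integrable_pmf_bounded[where B=1]) (auto simp: pmf_le_1)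
  have Ueq: "U x = real L powr (- s) * pmf (W x) z powr (1 + s) + pmf (W x) z * r z powr s" for x
    unfolding U_def using W_pow_eq s by simp
  have intU: "integrable (measure_pmf p) U" unfolding Ueq using intW1 intW by auto
  have "measure_pmf.expectation P (\<lambda>g. pmf (W (g (e l))) z * q g z powr s) =
     measure_pmf.expectation p (\<lambda>x. measure_pmf.expectation (P' (e l))
        (\<lambda>g. pmf (W ((g(e l := x)) (e l))) z * q (g(e l := x)) z powr s))"
    unfolding P_def P'_def by (rule exp_Pi_split[OF I elI, where K=1]) (rule bnd)
  also have "\<dots> = measure_pmf.expectation p (\<lambda>x. measure_pmf.expectation (P' (e l))
        (\<lambda>g. pmf (W x) z * q (g(e l := x)) z powr s))" by simp
  also have "\<dots> \<le> measure_pmf.expectation p U"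
  proof (rule integral_mono_AE'[OF intU])
    show "AE x in measure_pmf p. measure_pmf.expectation (P' (e l))
        (\<lambda>g. pmf (W x) z * q (g(e l := x)) z powr s) \<le> U x"
      unfolding U_def by (rule AE_pmfI) (rule inner_pow[OF l _ s])
  qed (use U0 in auto)
  also have "\<dots> = real L powr (- s) * measure_pmf.expectation p (\<lambda>x. pmf (W x) z powr (1 + s)) + r z * r z powr s"
    unfolding Ueq using intW1 intW by (simp add: r_exp)
  also have "r z * r z powr s = r z powr (1 + s)"
    using r_nonneg[of z] by (cases "r z = 0") (simp_all add: powr_add)
  finally show ?thesis .
qed

lemma q_pow_bound:
  assumes s: "0 < s" "s < 1"
  shows "measure_pmf.expectation P (\<lambda>g. q g z powr (1 + s))
     \<le> real L powr (- s) * measure_pmf.expectation p (\<lambda>x. pmf (W x) z powr (1 + s)) + r z powr (1 + s)"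
proof -
  have eq: "q g z powr (1 + s) = (\<Sum>l<L. pmf (W (g (e l))) z * q g z powr s) / real L" for g
  proof -
    have "q g z powr (1 + s) = q g z * q g z powr s"
      using q_nonneg[of g z] by (cases "q g z = 0") (simp_all add: powr_add)
    also have "\<dots> = (\<Sum>l<L. pmf (W (g (e l))) z * q g z powr s) / real L"
      unfolding q_def[of g z] by (simp add: sum_distrib_right)
    finally show ?thesis by (simp add: q_def)
  qed
  have intl: "integrable (measure_pmf P) (\<lambda>g. pmf (W (g (e l))) z * q g z powr s)" for l
  proof (rule integrable_pmf_bounded[where B=1])
    fix g
    have "q g z powr s \<le> 1" using q_nonneg q_le1 s by (intro powr_le1) auto
    then show "\<bar>pmf (W (g (e l))) z * q g z powr s\<bar> \<le> 1"
      using pmf_le_1[of "W (g (e l))" z] by (simp add: abs_mult mult_le_one)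
  qed
  have "measure_pmf.expectation P (\<lambda>g. q g z powr (1 + s)) =
      (\<Sum>l<L. measure_pmf.expectation P (\<lambda>g. pmf (W (g (e l))) z * q g z powr s)) / real L"
    unfolding eq using intl by (simp add: Bochner_Integration.integral_sum)
  also have "\<dots> \<le> (\<Sum>l<L. real L powr (- s) * measure_pmf.expectation p (\<lambda>x. pmf (W x) z powr (1 + s)) + r z powr (1 + s)) / real L"
    by (intro divide_right_mono sum_mono key_pow s) auto
  also have "\<dots> = real L powr (- s) * measure_pmf.expectation p (\<lambda>x. pmf (W x) z powr (1 + s)) + r z powr (1 + s)"
    using L by simp
  finally show ?thesis .
qed

end

lemma le_exp_ln: fixes T :: real assumes "T \<ge> 0" shows "T \<le> exp (ln T)"
  using assms by (cases "T = 0") auto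

context blk begin

lemma q_pmf_facts:
  assumes g: "g \<in> set_pmf P" and that: "s > 0"
  shows "s * KL_div (q g) r \<le> ln (\<Sum>z\<in>UNIV. q g z powr (1 + s) * r z powr (- s))"
    "(\<Sum>z\<in>UNIV. q g z powr (1 + s) * r z powr (- s)) > 0"
    "KL_div (q g) r \<ge> 0"
proof -
  show "s * KL_div (q g) r \<le> ln (\<Sum>z\<in>UNIV. q g z powr (1 + s) * r z powr (- s))"
    by (rule renyi(1)) (use q_nonneg q_sum r_nonneg q_supp[OF g] that in auto)
  show "(\<Sum>z\<in>UNIV. q g z powr (1 + s) * r z powr (- s)) > 0"
    by (rule renyi(2)) (use q_nonneg q_sum r_nonneg q_supp[OF g] that in auto)
  show "KL_div (q g) r \<ge> 0"
    by (rule gibbs) (use q_nonneg q_sum r_nonneg r_sum q_supp[OF g] in auto)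
qed

lemma KL_nonneg: "g \<in> set_pmf P \<Longrightarrow> KL_div (q g) r \<ge> 0"
  by (rule gibbs) (use q_nonneg q_sum r_nonneg r_sum q_supp in auto)

lemma KL_bounded: "\<bar>KL_div (q g) r\<bar> \<le> (\<Sum>z\<in>UNIV. real L + \<bar>ln (r z)\<bar>)"
proof -
  have "\<bar>KL_div (q g) r\<bar> \<le> (\<Sum>z\<in>UNIV. \<bar>(\<Sum>l<L. pmf (W (g (e l))) z * ln (q g z / r z)) / real L\<bar>)"
    unfolding KL_expand by (rule sum_abs)
  also have "\<dots> \<le> (\<Sum>z\<in>UNIV. real L + \<bar>ln (r z)\<bar>)"
  proof (intro sum_mono)
    fix z
    have "\<bar>(\<Sum>l<L. pmf (W (g (e l))) z * ln (q g z / r z))\<bar> \<le> (\<Sum>l<L. real L + \<bar>ln (r z)\<bar>)"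
      by (rule order_trans[OF sum_abs]) (intro sum_mono F_bound, simp)
    then show "\<bar>(\<Sum>l<L. pmf (W (g (e l))) z * ln (q g z / r z)) / real L\<bar> \<le> real L + \<bar>ln (r z)\<bar>"
      using L by (simp add: field_simps)
  qed
  finally show ?thesis .
qed

lemma int_KL: "integrable (measure_pmf P) (\<lambda>g. KL_div (q g) r)"
  by (rule integrable_pmf_bounded) (rule KL_bounded)

lemma KL_t_bound:
  assumes t: "t \<in> {-1/2..<0}"
  shows "measure_pmf.expectation P (\<lambda>g. KL_div (q g) r) \<le> ln (1 + real L powr t * exp (phi t W p)) / (- t)"
proof -
  define s where "s = - t"
  have s: "0 < s" "s < 1" using t by (auto simp: s_def)
  define X where "X g = (\<Sum>z\<in>UNIV. q g z powr (1 + s) * r z powr (- s))" for g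
  define XB where "XB = (\<Sum>z\<in>UNIV. r z powr (- s))"
  have Xle: "X g \<le> XB" for g unfolding X_def XB_def
  proof (intro sum_mono)
    fix z have "q g z powr (1 + s) \<le> 1" using q_nonneg q_le1 s by (intro powr_le1) auto
    then show "q g z powr (1 + s) * r z powr (- s) \<le> r z powr (- s)"
      by (simp add: mult_left_le_one_le)
  qed
  have X1: "X g \<ge> 1" if g: "g \<in> set_pmf P" for g
  proof -
    have "s * KL_div (q g) r \<le> ln (X g)" "X g > 0" "KL_div (q g) r \<ge> 0"
      using q_pmf_facts[OF g s(1)] s by (auto simp: X_def)
    then have "ln (X g) \<ge> 0" using s by (meson mult_nonneg_nonneg less_imp_le order_trans)
    then show ?thesis using \<open>X g > 0\<close> by simp
  qed
  have lnX: "\<bar>ln (X g)\<bar> \<le> \<bar>ln 1\<bar> + \<bar>ln XB\<bar>" if g: "g \<in> set_pmf P" for g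
    by (rule abs_ln_between) (use X1[OF g] Xle[of g] in auto)
  have int_lnX': "integrable (measure_pmf P) (\<lambda>g. ln (X g))"
    by (rule integrable_pmf_bounded) (rule lnX)
  have int_lnX: "integrable (measure_pmf P) (\<lambda>g. ln (X g) / s)"
    using int_lnX' by auto
  have int_X: "integrable (measure_pmf P) X"
  proof (rule integrable_pmf_bounded[where B=XB])
    fix g assume "g \<in> set_pmf P"
    then show "\<bar>X g\<bar> \<le> XB" using X1[of g] Xle[of g] by simp
  qed
  have "measure_pmf.expectation P (\<lambda>g. KL_div (q g) r) \<le> measure_pmf.expectation P (\<lambda>g. ln (X g) / s)"
  proof (rule integral_mono_AE'[OF int_lnX])
    show "AE g in measure_pmf P. KL_div (q g) r \<le> ln (X g) / s"
      using q_pmf_facts(1)[OF _ s(1)] s by (intro AE_pmfI) (auto simp: X_def field_simps)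
    show "AE g in measure_pmf P. 0 \<le> ln (X g) / s"
      using X1 s by (intro AE_pmfI) auto
  qed
  also have "\<dots> = measure_pmf.expectation P (\<lambda>g. ln (X g)) / s" by simp
  finally have step1: "measure_pmf.expectation P (\<lambda>g. KL_div (q g) r) \<le> measure_pmf.expectation P (\<lambda>g. ln (X g)) / s" .
  have "measure_pmf.expectation P (\<lambda>g. ln (X g)) \<le> ln (measure_pmf.expectation P X)"
  proof -
    define m where "m = measure_pmf.expectation P X"
    have m1: "m \<ge> 1"
    proof -
      have "measure_pmf.expectation P (\<lambda>_. 1) \<le> m" unfolding m_def
        using int_X X1 by (intro integral_mono_AE AE_pmfI) auto
      then show ?thesis by simp
    qed
    have "measure_pmf.expectation P (\<lambda>g. ln (X g)) \<le> measure_pmf.expectation P (\<lambda>g. ln m + X g / m - 1)"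
      using int_lnX' int_X X1 m1 by (intro integral_mono_AE AE_pmfI ln_tangent) (auto intro: less_le_trans[OF zero_less_one])
    also have "\<dots> = ln m + m / m - 1" using int_X by (simp add: m_def)
    also have "\<dots> = ln m" using m1 by simp
    finally show ?thesis unfolding m_def .
  qed
  also have "ln (measure_pmf.expectation P X) \<le> ln (1 + real L powr t * exp (phi t W p))"
  proof (rule ln_mono)
    have m1: "measure_pmf.expectation P X \<ge> 1"
    proof -
      have "measure_pmf.expectation P (\<lambda>_. 1) \<le> measure_pmf.expectation P X"
        using int_X X1 by (intro integral_mono_AE AE_pmfI) auto
      then show ?thesis by simp
    qed
    then show "0 < measure_pmf.expectation P X" by simp
    define EW where "EW z = measure_pmf.expectation p (\<lambda>x. pmf (W x) z powr (1 + s))" for z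
    have intq: "integrable (measure_pmf P) (\<lambda>g. q g z powr (1 + s))" for z
      by (rule integrable_pmf_bounded[where B=1]) (use q_nonneg q_le1 s in \<open>auto intro!: powr_le1\<close>)
    have "measure_pmf.expectation P X = (\<Sum>z\<in>UNIV. measure_pmf.expectation P (\<lambda>g. q g z powr (1 + s)) * r z powr (- s))"
      unfolding X_def using intq by (simp add: Bochner_Integration.integral_sum)
    also have "\<dots> \<le> (\<Sum>z\<in>UNIV. real L powr (- s) * (EW z * r z powr (- s)) + r z)"
    proof (intro sum_mono)
      fix z show "measure_pmf.expectation P (\<lambda>g. q g z powr (1 + s)) * r z powr (- s)
          \<le> real L powr (- s) * (EW z * r z powr (- s)) + r z"
      proof (cases "r z = 0")
        case True then show ?thesis by simp
      next
        case False
        then have rp: "r z > 0" using r_nonneg[of z] by simp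
        have "measure_pmf.expectation P (\<lambda>g. q g z powr (1 + s)) * r z powr (- s)
          \<le> (real L powr (- s) * EW z + r z powr (1 + s)) * r z powr (- s)"
          unfolding EW_def by (intro mult_right_mono q_pow_bound s) auto
        also have "\<dots> = real L powr (- s) * (EW z * r z powr (- s)) + r z"
          using rp by (simp add: distrib_right powr_add[symmetric])
        finally show ?thesis .
      qed
    qed
    also have "\<dots> = real L powr (- s) * (\<Sum>z\<in>UNIV. EW z * r z powr (- s)) + 1"
      by (simp add: sum.distrib sum_distrib_left r_sum)
    also have "(\<Sum>z\<in>UNIV. EW z * r z powr (- s)) \<le>
        (\<Sum>z\<in>UNIV. (measure_pmf.expectation p (\<lambda>x. pmf (W x) z powr (1 / (1 - s)))) powr (1 - s))"
      unfolding EW_def r_exp by (intro sum_mono holder_interp s) (auto simp: pmf_le_1)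
    also have "\<dots> \<le> exp (phi t W p)"
      unfolding phi_def s_def by simp (rule le_exp_ln, auto intro: sum_nonneg)
    finally show "measure_pmf.expectation P X \<le> 1 + real L powr t * exp (phi t W p)"
      by (simp add: s_def mult_left_mono)
  qed
  finally have "measure_pmf.expectation P (\<lambda>g. ln (X g)) \<le> ln (1 + real L powr t * exp (phi t W p))" .
  then have "measure_pmf.expectation P (\<lambda>g. ln (X g)) / s \<le> ln (1 + real L powr t * exp (phi t W p)) / s"
    using s by (intro divide_right_mono) auto
  with step1 show ?thesis by (simp add: s_def)
qed

end

lemma exp_Pi_indep:
  fixes u v :: "'a \<Rightarrow> real"
  assumes I: "finite I" and j: "j \<in> I" and k: "k \<in> I" and jk: "j \<noteq> k"
    and u: "\<And>x. \<bar>u x\<bar> \<le> Bu" and v: "\<And>x. \<bar>v x\<bar> \<le> Bv"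
  shows "measure_pmf.expectation (Pi_pmf I d (\<lambda>_. p)) (\<lambda>g. u (g j) * v (g k)) =
     measure_pmf.expectation p u * measure_pmf.expectation p v"
proof -
  have "measure_pmf.expectation (Pi_pmf I d (\<lambda>_. p)) (\<lambda>g. u (g j) * v (g k)) =
     measure_pmf.expectation p (\<lambda>x. measure_pmf.expectation (Pi_pmf (I - {j}) d (\<lambda>_. p))
        (\<lambda>g. u ((g(j:=x)) j) * v ((g(j:=x)) k)))"
  proof (rule exp_Pi_split[OF I j, where K="Bu * Bv"])
    fix g show "\<bar>u (g j) * v (g k)\<bar> \<le> Bu * Bv"
      unfolding abs_mult by (intro mult_mono u v) (use u[of "g j"] in auto)
  qed
  also have "\<dots> = measure_pmf.expectation p (\<lambda>x. u x * measure_pmf.expectation (Pi_pmf (I - {j}) d (\<lambda>_. p)) (\<lambda>g. v (g k)))"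
    using jk by simp
  also have "\<dots> = measure_pmf.expectation p (\<lambda>x. u x * measure_pmf.expectation p v)"
    using I k jk by (subst exp_Pi_component) auto
  also have "\<dots> = measure_pmf.expectation p u * measure_pmf.expectation p v" by simp
  finally show ?thesis .
qed

lemma sqrt_from_tangent:
  fixes X D :: real assumes D: "D \<ge> 0" and H: "\<And>c. c > 0 \<Longrightarrow> X \<le> D / (2 * c) + c / 2"
  shows "X \<le> sqrt D"
proof (cases "D = 0")
  case True
  show ?thesis
  proof (rule ccontr)
    assume "\<not> X \<le> sqrt D"
    then have "X > 0" using True by simp
    then have "X \<le> D / (2 * X) + X / 2" by (rule H)
    then show False using True \<open>X > 0\<close> by simp
  qed
next
  case False
  then have Dp: "D > 0" using D by simp
  have "X \<le> D / (2 * sqrt D) + sqrt D / 2" using Dp by (intro H) simp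
  also have "\<dots> = sqrt D"
  proof -
    have "D = sqrt D * sqrt D" using D by simp
    then have "D / (2 * sqrt D) = sqrt D / 2" using Dp by (metis nonzero_mult_div_cancel_right real_sqrt_gt_0_iff times_divide_eq_left div_by_1 mult.commute divide_divide_eq_left' less_irrefl)
    then show ?thesis by simp
  qed
  finally show ?thesis .
qed

lemma abs_tangent:
  fixes y c r :: real assumes "c > 0" "r > 0"
  shows "\<bar>y\<bar> \<le> y\<^sup>2 / (2 * c * r) + c * r / 2"
proof -
  have "0 \<le> (\<bar>y\<bar> - c * r)\<^sup>2" by simp
  then have "2 * (c * r) * \<bar>y\<bar> \<le> y\<^sup>2 + (c * r)\<^sup>2" by (simp add: power2_eq_square algebra_simps)
  then have "\<bar>y\<bar> \<le> (y\<^sup>2 + (c * r)\<^sup>2) / (2 * (c * r))" using assms by (simp add: field_simps)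
  also have "\<dots> = y\<^sup>2 / (2 * c * r) + c * r / 2" using assms by (simp add: field_simps power2_eq_square)
  finally show ?thesis .
qed

context blk begin

definition W1 :: "real \<Rightarrow> 'z \<Rightarrow> 'x \<Rightarrow> real" where
  "W1 C z x = (if pmf (W x) z \<le> C * r z then pmf (W x) z else 0)"
definition r1 where "r1 C z = measure_pmf.expectation p (W1 C z)"
definition r2 where "r2 C z = measure_pmf.expectation p (Bf C z)"
definition q1 where "q1 C g z = (\<Sum>l<L. W1 C z (g (e l))) / real L"
definition q2 where "q2 C g z = (\<Sum>l<L. Bf C z (g (e l))) / real L"

lemma W_split: "pmf (W x) z = W1 C z x + Bf C z x" unfolding W1_def Bf_def by auto
lemma W1_nonneg: "W1 C z x \<ge> 0" unfolding W1_def by auto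
lemma W1_le1: "W1 C z x \<le> 1" unfolding W1_def by (auto simp: pmf_le_1)
lemma Bf_le1: "Bf C z x \<le> 1" unfolding Bf_def by (auto simp: pmf_le_1)
lemma int_W1: "integrable (measure_pmf M) (W1 C z)"
  by (rule integrable_pmf_bounded[where B=1]) (use W1_nonneg W1_le1 in \<open>auto simp: abs_of_nonneg\<close>)
lemma r_split: "r z = r1 C z + r2 C z"
  unfolding r1_def r2_def r_exp W_split[of _ z C] using int_W1 int_Bf
  by (simp add: Bochner_Integration.integral_add)
lemma q_split2: "q g z = q1 C g z + q2 C g z"
  unfolding q_def q1_def q2_def W_split[of _ z C] by (simp add: sum.distrib add_divide_distrib)
lemma q1_nonneg: "q1 C g z \<ge> 0" unfolding q1_def by (intro divide_nonneg_nonneg sum_nonneg W1_nonneg) auto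
lemma q2_nonneg: "q2 C g z \<ge> 0" unfolding q2_def by (intro divide_nonneg_nonneg sum_nonneg Bf_nonneg) auto
lemma q1_le1: "q1 C g z \<le> 1"
proof -
  have "(\<Sum>l<L. W1 C z (g (e l))) \<le> (\<Sum>l<L. 1)" by (intro sum_mono W1_le1)
  then show ?thesis unfolding q1_def using L by (simp add: field_simps)
qed
lemma q2_le1: "q2 C g z \<le> 1"
proof -
  have "(\<Sum>l<L. Bf C z (g (e l))) \<le> (\<Sum>l<L. 1)" by (intro sum_mono Bf_le1)
  then show ?thesis unfolding q2_def using L by (simp add: field_simps)
qed
lemma r1_nonneg: "r1 C z \<ge> 0" unfolding r1_def by (intro integral_nonneg_AE AE_pmfI W1_nonneg)
lemma r1_le1: "r1 C z \<le> 1"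
proof -
  have "r1 C z \<le> measure_pmf.expectation p (\<lambda>_. 1::real)" unfolding r1_def
    by (intro integral_mono int_W1 W1_le1) auto
  then show ?thesis by simp
qed

lemma E_q2: "measure_pmf.expectation P (\<lambda>g. q2 C g z) = r2 C z"
proof -
  have "measure_pmf.expectation P (\<lambda>g. q2 C g z) = (\<Sum>l<L. measure_pmf.expectation P (\<lambda>g. Bf C z (g (e l)))) / real L"
  proof -
    have i: "integrable (measure_pmf P) (\<lambda>g. Bf C z (g (e l)))" for l
      by (rule integrable_pmf_bounded[where B=1]) (simp add: abs_of_nonneg Bf_nonneg Bf_le1)
    show ?thesis unfolding q2_def
      by (simp only: integral_divide_zero Bochner_Integration.integral_sum[OF i])
  qed
  also have "\<dots> = (\<Sum>l<L. r2 C z) / real L"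
    unfolding P_def r2_def using e_I by (intro arg_cong2[where f="(/)"] sum.cong refl exp_Pi_component I) auto
  also have "\<dots> = r2 C z" using L by simp
  finally show ?thesis .
qed

lemma E_Y2:
  "measure_pmf.expectation P (\<lambda>g. (q1 C g z - r1 C z)\<^sup>2) \<le> measure_pmf.expectation p (\<lambda>x. (W1 C z x)\<^sup>2) / real L"
proof -
  define U where "U x = W1 C z x - r1 C z" for x
  have Ub: "\<bar>U x\<bar> \<le> 2" for x unfolding U_def using W1_nonneg[of C z x] W1_le1[of C z x] r1_nonneg[of C z] r1_le1[of C z] by auto
  have intU: "integrable (measure_pmf M) U" for M by (rule integrable_pmf_bounded[where B=2]) (rule Ub)
  have EU: "measure_pmf.expectation p U = 0" unfolding U_def r1_def using int_W1 by simp
  have Yeq: "(q1 C g z - r1 C z)\<^sup>2 = (\<Sum>l<L. \<Sum>l'<L. U (g (e l)) * U (g (e l'))) / (real L)\<^sup>2" for g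
  proof -
    have "q1 C g z - r1 C z = (\<Sum>l<L. U (g (e l))) / real L"
      unfolding q1_def U_def using L by (simp add: sum_subtractf field_simps)
    then show ?thesis by (simp add: power2_eq_square sum_product)
  qed
  have cross: "measure_pmf.expectation P (\<lambda>g. U (g (e l)) * U (g (e l'))) =
      (if l = l' then measure_pmf.expectation p (\<lambda>x. (U x)\<^sup>2) else 0)" if l: "l < L" "l' < L" for l l'
  proof (cases "l = l'")
    case True
    then show ?thesis unfolding P_def using I e_I l
      by (simp add: power2_eq_square[symmetric]) (intro exp_Pi_component, auto)
  next
    case False
    then have "e l \<noteq> e l'" using e_inj l by (auto dest: inj_onD)
    then have "measure_pmf.expectation P (\<lambda>g. U (g (e l)) * U (g (e l'))) =
        measure_pmf.expectation p U * measure_pmf.expectation p U"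
      unfolding P_def using I e_I l by (intro exp_Pi_indep[where Bu=2 and Bv=2] Ub) auto
    then show ?thesis using False EU by simp
  qed
  have intUU: "integrable (measure_pmf P) (\<lambda>g. U (g (e l)) * U (g (e l')))" for l l'
  proof (rule integrable_pmf_bounded[where B=4])
    fix g
    have "\<bar>U (g (e l))\<bar> * \<bar>U (g (e l'))\<bar> \<le> 2 * 2" by (intro mult_mono Ub) auto
    then show "\<bar>U (g (e l)) * U (g (e l'))\<bar> \<le> 4" by (simp add: abs_mult)
  qed
  have "measure_pmf.expectation P (\<lambda>g. (q1 C g z - r1 C z)\<^sup>2) =
     (\<Sum>l<L. \<Sum>l'<L. measure_pmf.expectation P (\<lambda>g. U (g (e l)) * U (g (e l')))) / (real L)\<^sup>2"
    unfolding Yeq using intUU by (simp add: Bochner_Integration.integral_sum integrable_sum)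
  also have "\<dots> = (\<Sum>l<L. \<Sum>l'<L. (if l = l' then measure_pmf.expectation p (\<lambda>x. (U x)\<^sup>2) else 0)) / (real L)\<^sup>2"
    using cross by (intro arg_cong2[where f="(/)"] sum.cong refl) auto
  also have "\<dots> = measure_pmf.expectation p (\<lambda>x. (U x)\<^sup>2) / real L"
    using L by (simp add: power2_eq_square)
  also have "measure_pmf.expectation p (\<lambda>x. (U x)\<^sup>2) \<le> measure_pmf.expectation p (\<lambda>x. (W1 C z x)\<^sup>2)"
  proof -
    have intW2: "integrable (measure_pmf p) (\<lambda>x. (W1 C z x)\<^sup>2)"
      by (rule integrable_pmf_bounded[where B=1]) (use W1_nonneg W1_le1 in \<open>auto simp: power_le_one abs_of_nonneg\<close>)
    have "(U x)\<^sup>2 = (W1 C z x)\<^sup>2 - 2 * r1 C z * W1 C z x + (r1 C z)\<^sup>2" for x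
      unfolding U_def by (simp add: power2_eq_square algebra_simps)
    then have "measure_pmf.expectation p (\<lambda>x. (U x)\<^sup>2) =
        measure_pmf.expectation p (\<lambda>x. (W1 C z x)\<^sup>2) - 2 * r1 C z * r1 C z + (r1 C z)\<^sup>2"
      using intW2 int_W1 by (simp add: Bochner_Integration.integral_add Bochner_Integration.integral_diff r1_def)
    then show ?thesis by (simp add: power2_eq_square)
  qed
  finally show ?thesis using L by (simp add: divide_right_mono)
qed


lemma r2_nonneg: "r2 C z \<ge> 0" unfolding r2_def by (rule E_Bf_nonneg)

lemma q1_zero: "g \<in> set_pmf P \<Longrightarrow> r z = 0 \<Longrightarrow> q1 C g z = 0"
proof -
  assume g: "g \<in> set_pmf P" and rz: "r z = 0"
  have "W1 C z (g (e l)) = 0" if l: "l < L" for l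
  proof -
    have "g (e l) \<in> set_pmf p" using Pi_set_component[OF I _ g[unfolded P_def]] e_I l by auto
    then have "pmf (W (g (e l))) z = 0" using r_zero rz by auto
    then show ?thesis unfolding W1_def by simp
  qed
  then show ?thesis unfolding q1_def by simp
qed

lemma r1_zero: "r z = 0 \<Longrightarrow> r1 C z = 0"
  using r_split[of z C] r1_nonneg[of C z] r2_nonneg[of C z] by simp

lemma W1_sq: "r z > 0 \<Longrightarrow> (W1 C z x)\<^sup>2 = r z * A C z x"
  unfolding W1_def A_def by auto

lemma Y_abs2: "\<bar>q1 C g z - r1 C z\<bar> \<le> 2"
  using q1_nonneg[of C g z] q1_le1[of C g z] r1_nonneg[of C z] r1_le1[of C z] by (simp add: abs_le_iff)

lemma intY_single: "integrable (measure_pmf P) (\<lambda>g. \<bar>q1 C g z - r1 C z\<bar>)"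
  by (rule integrable_pmf_bounded[where B=2]) (simp add: Y_abs2)

lemma Y_part:
  "measure_pmf.expectation P (\<lambda>g. \<Sum>z\<in>UNIV. \<bar>q1 C g z - r1 C z\<bar>) \<le> sqrt (delta' p W C / real L)"
proof (rule sqrt_from_tangent)
  show "0 \<le> delta' p W C / real L" unfolding delta'_eq by (intro divide_nonneg_nonneg sum_nonneg E_A_nonneg) auto
  fix c :: real assume c: "c > 0"
  have intY: "integrable (measure_pmf P) (\<lambda>g. \<bar>q1 C g z - r1 C z\<bar>)" for z
    by (rule intY_single)
  have intY2: "integrable (measure_pmf P) (\<lambda>g. (q1 C g z - r1 C z)\<^sup>2)" for z
  proof (rule integrable_pmf_bounded[where B=4])
    fix g
    have "\<bar>q1 C g z - r1 C z\<bar> \<le> 2" by (rule Y_abs2)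
    then have "\<bar>q1 C g z - r1 C z\<bar>\<^sup>2 \<le> 2\<^sup>2" by (intro power_mono) auto
    then show "\<bar>(q1 C g z - r1 C z)\<^sup>2\<bar> \<le> 4" by simp
  qed
  have pz: "measure_pmf.expectation P (\<lambda>g. \<bar>q1 C g z - r1 C z\<bar>) \<le>
      measure_pmf.expectation p (A C z) / (2 * c * real L) + c * r z / 2" for z
  proof (cases "r z = 0")
    case True
    have "measure_pmf.expectation P (\<lambda>g. \<bar>q1 C g z - r1 C z\<bar>) = measure_pmf.expectation P (\<lambda>g. 0)"
      by (intro integral_cong_AE) (auto simp: AE_measure_pmf_iff q1_zero True r1_zero)
    then show ?thesis using True E_A_nonneg[of C z] c L by simp
  next
    case False
    then have rp: "r z > 0" using r_nonneg[of z] by simp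
    have "measure_pmf.expectation P (\<lambda>g. \<bar>q1 C g z - r1 C z\<bar>) \<le>
        measure_pmf.expectation P (\<lambda>g. (q1 C g z - r1 C z)\<^sup>2 / (2 * c * r z) + c * r z / 2)"
      using intY intY2 c rp by (intro integral_mono abs_tangent) auto
    also have "\<dots> = measure_pmf.expectation P (\<lambda>g. (q1 C g z - r1 C z)\<^sup>2) / (2 * c * r z) + c * r z / 2"
      using intY2 by simp
    also have "\<dots> \<le> (measure_pmf.expectation p (\<lambda>x. (W1 C z x)\<^sup>2) / real L) / (2 * c * r z) + c * r z / 2"
      using c rp by (intro add_right_mono divide_right_mono E_Y2) auto
    also have "measure_pmf.expectation p (\<lambda>x. (W1 C z x)\<^sup>2) = r z * measure_pmf.expectation p (A C z)"
      using W1_sq[OF rp] by simp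
    also have "(r z * measure_pmf.expectation p (A C z) / real L) / (2 * c * r z) =
        measure_pmf.expectation p (A C z) / (2 * c * real L)" using rp c by (simp add: field_simps)
    finally show ?thesis .
  qed
  have "measure_pmf.expectation P (\<lambda>g. \<Sum>z\<in>UNIV. \<bar>q1 C g z - r1 C z\<bar>) =
      (\<Sum>z\<in>UNIV. measure_pmf.expectation P (\<lambda>g. \<bar>q1 C g z - r1 C z\<bar>))"
    by (rule Bochner_Integration.integral_sum) (rule intY)
  also have "\<dots> \<le> (\<Sum>z\<in>UNIV. measure_pmf.expectation p (A C z) / (2 * c * real L) + c * r z / 2)"
    by (intro sum_mono pz)
  also have "\<dots> = delta' p W C / real L / (2 * c) + c / 2"
    by (simp add: sum.distrib delta'_eq sum_divide_distrib[symmetric] sum_distrib_left[symmetric] r_sum)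
  finally show "measure_pmf.expectation P (\<lambda>g. \<Sum>z\<in>UNIV. \<bar>q1 C g z - r1 C z\<bar>) \<le> delta' p W C / real L / (2 * c) + c / 2" .
qed

lemma l1_bound:
  "measure_pmf.expectation P (\<lambda>g. l1_dist (q g) r) \<le> 2 * delta p W C + sqrt (delta' p W C / real L)"
proof -
  have intY: "integrable (measure_pmf P) (\<lambda>g. \<Sum>z\<in>UNIV. \<bar>q1 C g z - r1 C z\<bar>)"
    by (rule Bochner_Integration.integrable_sum) (rule intY_single)
  have intq2: "integrable (measure_pmf P) (\<lambda>g. q2 C g z)" for z
    by (rule integrable_pmf_bounded[where B=1]) (simp add: abs_le_iff q2_le1 order_trans[OF _ q2_nonneg])
  have intl1: "integrable (measure_pmf P) (\<lambda>g. l1_dist (q g) r)"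
    unfolding l1_dist_def
  proof (intro Bochner_Integration.integrable_sum integrable_pmf_bounded[where B=2])
    fix z g show "\<bar>\<bar>q g z - r z\<bar>\<bar> \<le> 2"
      using q_nonneg[of g z] q_le1[of g z] r_nonneg[of z] r_le1[of z] by (simp add: abs_le_iff)
  qed
  have "measure_pmf.expectation P (\<lambda>g. l1_dist (q g) r) \<le>
     measure_pmf.expectation P (\<lambda>g. (\<Sum>z\<in>UNIV. \<bar>q1 C g z - r1 C z\<bar>) + (\<Sum>z\<in>UNIV. q2 C g z + r2 C z))"
  proof (intro integral_mono intl1)
    show "integrable (measure_pmf P) (\<lambda>g. (\<Sum>z\<in>UNIV. \<bar>q1 C g z - r1 C z\<bar>) + (\<Sum>z\<in>UNIV. q2 C g z + r2 C z))"
      using intY intq2 intY_single by (intro Bochner_Integration.integrable_add Bochner_Integration.integrable_sum) auto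
    fix g
    have "l1_dist (q g) r \<le> (\<Sum>z\<in>UNIV. \<bar>q1 C g z - r1 C z\<bar> + (q2 C g z + r2 C z))"
      unfolding l1_dist_def
    proof (intro sum_mono)
      fix z show "\<bar>q g z - r z\<bar> \<le> \<bar>q1 C g z - r1 C z\<bar> + (q2 C g z + r2 C z)"
        using q_split2[of g z C] r_split[of z C] q2_nonneg[of C g z] r2_nonneg[of C z] by (smt (verit))
    qed
    then show "l1_dist (q g) r \<le> (\<Sum>z\<in>UNIV. \<bar>q1 C g z - r1 C z\<bar>) + (\<Sum>z\<in>UNIV. q2 C g z + r2 C z)"
      by (simp add: sum.distrib)
  qed
  also have "\<dots> = measure_pmf.expectation P (\<lambda>g. \<Sum>z\<in>UNIV. \<bar>q1 C g z - r1 C z\<bar>) + (\<Sum>z\<in>UNIV. r2 C z + r2 C z)"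
    using intY intq2 by (simp add: Bochner_Integration.integral_add Bochner_Integration.integral_sum E_q2)
  also have "(\<Sum>z\<in>UNIV. r2 C z + r2 C z) = 2 * delta p W C"
    unfolding delta_eq r2_def by (simp add: sum.distrib sum_distrib_left)
  finally show ?thesis using Y_part[of C] by simp
qed

end

lemma nn_Pi_split:
  assumes I: "finite I" and k: "k \<in> I"
  shows "(\<integral>\<^sup>+g. F g \<partial>Pi_pmf I d (\<lambda>_. p)) =
     (\<integral>\<^sup>+x. (\<integral>\<^sup>+g. F (g(k:=x)) \<partial>Pi_pmf (I - {k}) d (\<lambda>_. p)) \<partial>p)"
proof -
  have eq: "Pi_pmf I d (\<lambda>_. p) = map_pmf (\<lambda>(y,f). f(k:=y)) (pair_pmf p (Pi_pmf (I - {k}) d (\<lambda>_. p)))"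
    using Pi_pmf_insert[of "I - {k}" k d "\<lambda>_. p"] I k by (simp add: insert_absorb)
  show ?thesis by (subst eq) (simp add: nn_integral_pair_pmf' case_prod_unfold)
qed

lemma nn_swap_pmf:
  fixes A :: "'a pmf" and B :: "'b pmf"
  shows "(\<integral>\<^sup>+a. (\<integral>\<^sup>+b. f a b \<partial>B) \<partial>A) = (\<integral>\<^sup>+b. (\<integral>\<^sup>+a. f a b \<partial>A) \<partial>B)"
proof -
  have "(\<integral>\<^sup>+a. (\<integral>\<^sup>+b. f a b \<partial>B) \<partial>A) = (\<integral>\<^sup>+x. (\<lambda>(a,b). f a b) x \<partial>pair_pmf A B)"
    by (simp add: nn_integral_pair_pmf')
  also have "\<dots> = (\<integral>\<^sup>+x. (\<lambda>(b,a). f a b) x \<partial>pair_pmf B A)"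
    by (subst pair_commute_pmf) (simp add: case_prod_unfold)
  also have "\<dots> = (\<integral>\<^sup>+b. (\<integral>\<^sup>+a. f a b \<partial>A) \<partial>B)"
    by (simp add: nn_integral_pair_pmf')
  finally show ?thesis .
qed

lemma nn_swap_pmf_count:
  fixes A :: "'a pmf"
  shows "(\<integral>\<^sup>+a. (\<integral>\<^sup>+b. f a b \<partial>count_space UNIV) \<partial>A) = (\<integral>\<^sup>+b. (\<integral>\<^sup>+a. f a b \<partial>A) \<partial>count_space UNIV)"
proof -
  have "(\<integral>\<^sup>+a. (\<integral>\<^sup>+b. f a b \<partial>count_space UNIV) \<partial>A) =
     (\<integral>\<^sup>+a. (\<integral>\<^sup>+b. ennreal (pmf A a) * f a b \<partial>count_space UNIV) \<partial>count_space UNIV)"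
    by (simp add: nn_integral_measure_pmf nn_integral_cmult)
  also have "\<dots> = (\<integral>\<^sup>+ab. (\<lambda>(a,b). ennreal (pmf A a) * f a b) ab \<partial>count_space UNIV)"
    using nn_integral_fst_count_space[of "\<lambda>(a,b). ennreal (pmf A a) * f a b"] by simp
  also have "\<dots> = (\<integral>\<^sup>+b. (\<integral>\<^sup>+a. ennreal (pmf A a) * f a b \<partial>count_space UNIV) \<partial>count_space UNIV)"
    using nn_integral_snd_count_space[of "\<lambda>(a,b). ennreal (pmf A a) * f a b"] by simp
  also have "\<dots> = (\<integral>\<^sup>+b. (\<integral>\<^sup>+a. f a b \<partial>A) \<partial>count_space UNIV)"
    by (simp add: nn_integral_measure_pmf)
  finally show ?thesis .
qed

lemma nn_Pi_component:
  assumes I: "finite I" and j: "j \<in> I"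
  shows "(\<integral>\<^sup>+g. F (g j) \<partial>Pi_pmf I d (\<lambda>_. p)) = (\<integral>\<^sup>+x. F x \<partial>p)"
proof -
  have "(\<integral>\<^sup>+g. F (g j) \<partial>Pi_pmf I d (\<lambda>_. p)) = (\<integral>\<^sup>+x. F x \<partial>map_pmf (\<lambda>g. g j) (Pi_pmf I d (\<lambda>_. p)))"
    by simp
  also have "map_pmf (\<lambda>g. g j) (Pi_pmf I d (\<lambda>_. p)) = p"
    using Pi_pmf_component[OF I, of j d "\<lambda>_. p"] j by simp
  finally show ?thesis .
qed

lemma min_le_powr:
  fixes v s :: real assumes "v \<ge> 0" "0 \<le> s" "s \<le> 1" shows "min 1 v \<le> v powr s"
proof (cases "v = 0")
  case False
  then have vp: "v > 0" using assms by simp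
  show ?thesis
  proof (cases "v \<le> 1")
    case True then show ?thesis using powr_ge_self[of v s] assms by simp
  next
    case False then have "1 \<le> v powr s" using assms by (simp add: ge_one_powr_ge_zero)
    then show ?thesis by simp
  qed
qed simp

locale bob =
  fixes WB :: "'x \<Rightarrow> 'y pmf" and p :: "'x pmf" and N :: nat and d :: 'x
  assumes N: "N > 0"
begin

definition P where "P = Pi_pmf {..<N} d (\<lambda>_. p)"
definition P' where "P' k = Pi_pmf ({..<N} - {k}) d (\<lambda>_. p)"
definition errset where
  "errset f k = {y. \<exists>j\<in>{..<N}-{k}. pmf (WB (f k)) y \<le> pmf (WB (f j)) y}"
definition err where "err f k = measure_pmf.prob (WB (f k)) (errset f k)"
definition EWa where "EWa s y = measure_pmf.expectation p (\<lambda>x. pmf (WB x) y powr (1 / (1 + s)))"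

lemma EWa_nonneg: "EWa s y \<ge> 0" unfolding EWa_def by (intro integral_nonneg_AE AE_pmfI) auto

lemma int_Wa: "s \<ge> 0 \<Longrightarrow> integrable (measure_pmf p) (\<lambda>x. pmf (WB x) y powr (1 / (1 + s)))"
  by (rule integrable_pmf_bounded[where B=1]) (auto intro!: powr_le1 simp: pmf_le_1)

lemma markov_Wa:
  assumes w: "w > 0" and s: "s \<ge> 0"
  shows "(\<integral>\<^sup>+x. indicator {x. w \<le> pmf (WB x) y} x \<partial>p) \<le> ennreal (EWa s y / w powr (1 / (1 + s)))"
proof -
  define a where "a = 1 / (1 + s)"
  have a: "a > 0" using s by (simp add: a_def)
  have "(\<integral>\<^sup>+x. indicator {x. w \<le> pmf (WB x) y} x \<partial>p) \<le> (\<integral>\<^sup>+x. ennreal (pmf (WB x) y powr a / w powr a) \<partial>p)"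
  proof (intro nn_integral_mono)
    fix x show "indicator {x. w \<le> pmf (WB x) y} x \<le> ennreal (pmf (WB x) y powr a / w powr a)"
    proof (cases "w \<le> pmf (WB x) y")
      case True
      then have "w powr a \<le> pmf (WB x) y powr a" using w a by (intro powr_mono2) auto
      then have "1 \<le> pmf (WB x) y powr a / w powr a" using w by simp
      then show ?thesis using True by simp
    qed simp
  qed
  also have "\<dots> = ennreal (measure_pmf.expectation p (\<lambda>x. pmf (WB x) y powr a / w powr a))"
    using int_Wa[OF s] by (intro nn_integral_eq_integral) (auto simp: a_def)
  also have "\<dots> = ennreal (EWa s y / w powr a)" by (simp add: EWa_def a_def)
  finally show ?thesis by (simp add: a_def)
qed

lemma inner_gal:
  assumes k: "k < N" and w: "w > 0" and s: "0 \<le> s" "s \<le> 1"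
  shows "(\<integral>\<^sup>+g. indicator {g. \<exists>j\<in>{..<N}-{k}. w \<le> pmf (WB (g j)) y} g \<partial>P' k)
     \<le> ennreal ((real N * EWa s y / w powr (1 / (1 + s))) powr s)"
proof -
  define v where "v = real N * EWa s y / w powr (1 / (1 + s))"
  have v0: "v \<ge> 0" unfolding v_def using EWa_nonneg by simp
  define J where "J = {..<N} - {k}"
  have le1: "(\<integral>\<^sup>+g. indicator {g. \<exists>j\<in>J. w \<le> pmf (WB (g j)) y} g \<partial>P' k) \<le> 1"
  proof -
    have "(\<integral>\<^sup>+g. indicator {g. \<exists>j\<in>J. w \<le> pmf (WB (g j)) y} g \<partial>P' k) \<le> (\<integral>\<^sup>+g. 1 \<partial>P' k)"
      by (intro nn_integral_mono) (simp split: split_indicator)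
    also have "\<dots> = 1" by simp
    finally show ?thesis .
  qed
  have lev: "(\<integral>\<^sup>+g. indicator {g. \<exists>j\<in>J. w \<le> pmf (WB (g j)) y} g \<partial>P' k) \<le> ennreal v"
  proof -
    have "(\<integral>\<^sup>+g. indicator {g. \<exists>j\<in>J. w \<le> pmf (WB (g j)) y} g \<partial>P' k) \<le>
        (\<integral>\<^sup>+g. (\<Sum>j\<in>J. indicator {g. w \<le> pmf (WB (g j)) y} g) \<partial>P' k)"
    proof (intro nn_integral_mono)
      fix g show "indicator {g. \<exists>j\<in>J. w \<le> pmf (WB (g j)) y} g \<le> (\<Sum>j\<in>J. indicator {g. w \<le> pmf (WB (g j)) y} g :: ennreal)"
      proof (cases "\<exists>j\<in>J. w \<le> pmf (WB (g j)) y")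
        case True
        then obtain j where j: "j \<in> J" "w \<le> pmf (WB (g j)) y" by blast
        have "(1::ennreal) = indicator {g. w \<le> pmf (WB (g j)) y} g" using j by simp
        also have "\<dots> \<le> (\<Sum>j\<in>J. indicator {g. w \<le> pmf (WB (g j)) y} g)"
          using j by (intro member_le_sum) (auto simp: J_def)
        finally show ?thesis using True by simp
      qed simp
    qed
    also have "\<dots> = (\<Sum>j\<in>J. (\<integral>\<^sup>+g. indicator {g. w \<le> pmf (WB (g j)) y} g \<partial>P' k))"
      by (intro nn_integral_sum) auto
    also have "\<dots> = (\<Sum>j\<in>J. (\<integral>\<^sup>+x. indicator {x. w \<le> pmf (WB x) y} x \<partial>p))"
    proof (intro sum.cong refl)
      fix j assume j: "j \<in> J"
      have "(\<integral>\<^sup>+g. indicator {g. w \<le> pmf (WB (g j)) y} g \<partial>P' k) =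
          (\<integral>\<^sup>+g. (\<lambda>x. indicator {x. w \<le> pmf (WB x) y} x) (g j) \<partial>P' k)"
        by (intro nn_integral_cong) (simp split: split_indicator)
      also have "\<dots> = (\<integral>\<^sup>+x. indicator {x. w \<le> pmf (WB x) y} x \<partial>p)"
        unfolding P'_def using j by (intro nn_Pi_component) (auto simp: J_def)
      finally show "(\<integral>\<^sup>+g. indicator {g. w \<le> pmf (WB (g j)) y} g \<partial>P' k) = (\<integral>\<^sup>+x. indicator {x. w \<le> pmf (WB x) y} x \<partial>p)" .
    qed
    also have "\<dots> \<le> (\<Sum>j\<in>J. ennreal (EWa s y / w powr (1 / (1 + s))))"
      by (intro sum_mono markov_Wa w s)
    also have "\<dots> = ennreal (real (card J) * (EWa s y / w powr (1 / (1 + s))))"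
      using EWa_nonneg[of s y] w by (simp add: ennreal_of_nat_eq_real_of_nat ennreal_mult'' del: times_divide_eq_right)
    also have "\<dots> \<le> ennreal v" unfolding v_def
    proof (intro ennreal_leI)
      have "card J \<le> card {..<N}" unfolding J_def by (intro card_mono) auto
      then have "real (card J) \<le> real N" by simp
      then show "real (card J) * (EWa s y / w powr (1 / (1 + s))) \<le> real N * EWa s y / w powr (1 / (1 + s))"
        using EWa_nonneg[of s y] w by (simp add: mult_right_mono divide_nonneg_nonneg times_divide_eq_right[symmetric] del: times_divide_eq_right)
    qed
    finally show ?thesis .
  qed
  have "(\<integral>\<^sup>+g. indicator {g. \<exists>j\<in>J. w \<le> pmf (WB (g j)) y} g \<partial>P' k) \<le> min 1 (ennreal v)"
    using le1 lev by simp
  also have "\<dots> = ennreal (min 1 v)" using v0 min_ennreal[of 1 v] by simp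
  also have "\<dots> \<le> ennreal (v powr s)" using min_le_powr[OF v0 s] by (rule ennreal_leI)
  finally show ?thesis unfolding J_def v_def .
qed


lemma err_nonneg: "err f k \<ge> 0" unfolding err_def by simp
lemma err_le1: "err f k \<le> 1" unfolding err_def by simp
lemma int_err: "integrable (measure_pmf M) (\<lambda>f. err f k)"
  by (rule integrable_pmf_bounded[where B=1]) (simp add: err_le1 abs_of_nonneg err_nonneg)

lemma pt_gal:
  fixes W E s :: real
  assumes W: "W \<ge> 0" and E: "E \<ge> 0" and s: "0 \<le> s"
  shows "W * (real N * E / W powr (1 / (1 + s))) powr s = real N powr s * E powr s * W powr (1 / (1 + s))"
proof (cases "W = 0")
  case True then show ?thesis using s by simp
next
  case False
  then have Wp: "W > 0" using W by simp
  define Y where "Y = W powr (s / (1 + s))"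
  have Yp: "Y > 0" using Wp by (simp add: Y_def)
  have "(real N * E / W powr (1 / (1 + s))) powr s = (real N * E) powr s / (W powr (1 / (1 + s))) powr s"
    using Wp E by (simp add: powr_divide)
  also have "(W powr (1 / (1 + s))) powr s = Y" unfolding Y_def by (simp add: powr_powr)
  also have "(real N * E) powr s = real N powr s * E powr s" using E by (simp add: powr_mult)
  finally have e1: "(real N * E / W powr (1 / (1 + s))) powr s = real N powr s * E powr s / Y" .
  have e2: "W / Y = W powr (1 / (1 + s))"
  proof -
    have "W / Y = W powr (1 - s / (1 + s))" using Wp by (simp add: powr_diff Y_def)
    also have "1 - s / (1 + s) = 1 / (1 + s)" using s by (simp add: field_simps)
    finally show ?thesis .
  qed
  have "W * (real N powr s * E powr s / Y) = real N powr s * E powr s * (W / Y)" by simp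
  then show ?thesis using e1 e2 by simp
qed

lemma gal:
  assumes k: "k < N" and s: "0 \<le> s" "s \<le> 1"
  shows "ennreal (measure_pmf.expectation P (\<lambda>f. err f k)) \<le> ennreal (real N powr s) * gallager_sum s WB p"
proof -
  define a where "a = 1 / (1 + s)"
  define J where "J = {..<N} - {k}"
  have kI: "k \<in> {..<N}" using k by simp
  have errx: "ennreal (err (g(k:=x)) k) = (\<integral>\<^sup>+y. indicator {g. \<exists>j\<in>J. pmf (WB x) y \<le> pmf (WB (g j)) y} g \<partial>WB x)"
    for g x
  proof -
    have "errset (g(k:=x)) k = {y. \<exists>j\<in>J. pmf (WB x) y \<le> pmf (WB (g j)) y}"
      unfolding errset_def J_def by auto
    then have "ennreal (err (g(k:=x)) k) = emeasure (measure_pmf (WB x)) {y. \<exists>j\<in>J. pmf (WB x) y \<le> pmf (WB (g j)) y}"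
      unfolding err_def by (simp add: measure_pmf.emeasure_eq_measure)
    also have "\<dots> = (\<integral>\<^sup>+y. indicator {y. \<exists>j\<in>J. pmf (WB x) y \<le> pmf (WB (g j)) y} y \<partial>WB x)"
      by simp
    also have "\<dots> = (\<integral>\<^sup>+y. indicator {g. \<exists>j\<in>J. pmf (WB x) y \<le> pmf (WB (g j)) y} g \<partial>WB x)"
      by (intro nn_integral_cong) (simp split: split_indicator)
    finally show ?thesis .
  qed
  have "ennreal (measure_pmf.expectation P (\<lambda>f. err f k)) = (\<integral>\<^sup>+f. ennreal (err f k) \<partial>P)"
    by (rule nn_integral_eq_integral[symmetric]) (auto intro: int_err simp: err_nonneg)
  also have "\<dots> = (\<integral>\<^sup>+x. (\<integral>\<^sup>+g. ennreal (err (g(k:=x)) k) \<partial>P' k) \<partial>p)"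
    unfolding P_def P'_def by (rule nn_Pi_split[OF _ kI]) simp
  also have "\<dots> = (\<integral>\<^sup>+x. (\<integral>\<^sup>+y. (\<integral>\<^sup>+g. indicator {g. \<exists>j\<in>J. pmf (WB x) y \<le> pmf (WB (g j)) y} g \<partial>P' k) \<partial>WB x) \<partial>p)"
    unfolding errx by (subst nn_swap_pmf) rule
  also have "\<dots> \<le> (\<integral>\<^sup>+x. (\<integral>\<^sup>+y. ennreal ((real N * EWa s y / pmf (WB x) y powr a) powr s) \<partial>WB x) \<partial>p)"
  proof (rule nn_integral_mono)
    fix x
    show "(\<integral>\<^sup>+y. (\<integral>\<^sup>+g. indicator {g. \<exists>j\<in>J. pmf (WB x) y \<le> pmf (WB (g j)) y} g \<partial>P' k) \<partial>WB x)
        \<le> (\<integral>\<^sup>+y. ennreal ((real N * EWa s y / pmf (WB x) y powr a) powr s) \<partial>WB x)"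
    proof (rule nn_integral_mono_AE, rule AE_pmfI)
      fix y assume y: "y \<in> set_pmf (WB x)"
      then have "pmf (WB x) y > 0" by (simp add: pmf_positive)
      then show "(\<integral>\<^sup>+g. indicator {g. \<exists>j\<in>J. pmf (WB x) y \<le> pmf (WB (g j)) y} g \<partial>P' k)
          \<le> ennreal ((real N * EWa s y / pmf (WB x) y powr a) powr s)"
        unfolding J_def a_def by (rule inner_gal[OF k _ s])
    qed
  qed
  also have "\<dots> = (\<integral>\<^sup>+x. (\<integral>\<^sup>+y. ennreal (real N powr s * EWa s y powr s * pmf (WB x) y powr a) \<partial>count_space UNIV) \<partial>p)"
  proof (intro nn_integral_cong)
    fix x
    have "(\<integral>\<^sup>+y. ennreal ((real N * EWa s y / pmf (WB x) y powr a) powr s) \<partial>WB x) =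
        (\<integral>\<^sup>+y. ennreal (pmf (WB x) y) * ennreal ((real N * EWa s y / pmf (WB x) y powr a) powr s) \<partial>count_space UNIV)"
      by (rule nn_integral_measure_pmf)
    also have "\<dots> = (\<integral>\<^sup>+y. ennreal (real N powr s * EWa s y powr s * pmf (WB x) y powr a) \<partial>count_space UNIV)"
    proof (intro nn_integral_cong)
      fix y
      have "ennreal (pmf (WB x) y) * ennreal ((real N * EWa s y / pmf (WB x) y powr a) powr s) =
          ennreal (pmf (WB x) y * (real N * EWa s y / pmf (WB x) y powr a) powr s)"
        by (simp add: ennreal_mult)
      also have "\<dots> = ennreal (real N powr s * EWa s y powr s * pmf (WB x) y powr a)"
        unfolding a_def using pt_gal[of "pmf (WB x) y" "EWa s y" s] EWa_nonneg s by simp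
      finally show "ennreal (pmf (WB x) y) * ennreal ((real N * EWa s y / pmf (WB x) y powr a) powr s) =
          ennreal (real N powr s * EWa s y powr s * pmf (WB x) y powr a)" .
    qed
    finally show "(\<integral>\<^sup>+y. ennreal ((real N * EWa s y / pmf (WB x) y powr a) powr s) \<partial>WB x) =
        (\<integral>\<^sup>+y. ennreal (real N powr s * EWa s y powr s * pmf (WB x) y powr a) \<partial>count_space UNIV)" .
  qed
  also have "\<dots> = (\<integral>\<^sup>+y. (\<integral>\<^sup>+x. ennreal (real N powr s * EWa s y powr s * pmf (WB x) y powr a) \<partial>p) \<partial>count_space UNIV)"
    by (rule nn_swap_pmf_count)
  also have "\<dots> = (\<integral>\<^sup>+y. ennreal (real N powr s) * ennreal (EWa s y powr (1 + s)) \<partial>count_space UNIV)"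
  proof (intro nn_integral_cong)
    fix y
    have "(\<integral>\<^sup>+x. ennreal (real N powr s * EWa s y powr s * pmf (WB x) y powr a) \<partial>p) =
        (\<integral>\<^sup>+x. ennreal (real N powr s * EWa s y powr s) * ennreal (pmf (WB x) y powr a) \<partial>p)"
      by (intro nn_integral_cong) (simp add: ennreal_mult)
    also have "\<dots> = ennreal (real N powr s * EWa s y powr s) * (\<integral>\<^sup>+x. ennreal (pmf (WB x) y powr a) \<partial>p)"
      by (simp add: nn_integral_cmult)
    also have "(\<integral>\<^sup>+x. ennreal (pmf (WB x) y powr a) \<partial>p) = ennreal (EWa s y)"
      unfolding EWa_def a_def by (rule nn_integral_eq_integral) (use int_Wa[OF s(1)] in auto)
    also have "ennreal (real N powr s * EWa s y powr s) * ennreal (EWa s y) =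
        ennreal (real N powr s) * ennreal (EWa s y powr (1 + s))"
    proof -
      have "EWa s y powr s * EWa s y = EWa s y powr (1 + s)"
        using EWa_nonneg[of s y] by (cases "EWa s y = 0") (simp_all add: powr_add)
      then show ?thesis using EWa_nonneg[of s y] by (simp add: ennreal_mult[symmetric] mult.assoc)
    qed
    finally show "(\<integral>\<^sup>+x. ennreal (real N powr s * EWa s y powr s * pmf (WB x) y powr a) \<partial>p) =
        ennreal (real N powr s) * ennreal (EWa s y powr (1 + s))" .
  qed
  also have "\<dots> = ennreal (real N powr s) * gallager_sum s WB p"
    unfolding gallager_sum_def EWa_def by (simp add: nn_integral_cmult)
  finally show ?thesis .
qed

end

lemma measure_bind_exp:
  "measure_pmf.prob (bind_pmf p W) S = measure_pmf.expectation p (\<lambda>x. measure_pmf.prob (W x) S)"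
proof -
  have "ennreal (measure_pmf.prob (bind_pmf p W) S) = emeasure (measure_pmf (bind_pmf p W)) S"
    by (simp add: measure_pmf.emeasure_eq_measure)
  also have "\<dots> = (\<integral>\<^sup>+x. emeasure (measure_pmf (W x)) S \<partial>p)" by simp
  also have "\<dots> = (\<integral>\<^sup>+x. ennreal (measure_pmf.prob (W x) S) \<partial>p)"
    by (simp add: measure_pmf.emeasure_eq_measure)
  also have "\<dots> = ennreal (measure_pmf.expectation p (\<lambda>x. measure_pmf.prob (W x) S))"
    by (rule nn_integral_eq_integral) (auto intro!: integrable_pmf_bounded[where B=1])
  finally show ?thesis by (simp add: ennreal_inj integral_nonneg_AE)
qed

context bob begin

definition rB where "rB y = pmf (out_dist WB p) y"

lemma prob_rB_bound:
  assumes C: "C' > 0"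
  shows "measure_pmf.prob (out_dist WB p) {y. C' * rB y < pmf (WB x') y} \<le> 1 / C'"
proof -
  have "ennreal (measure_pmf.prob (out_dist WB p) {y. C' * rB y < pmf (WB x') y}) =
      (\<integral>\<^sup>+y. indicator {y. C' * rB y < pmf (WB x') y} y \<partial>out_dist WB p)"
    by (simp add: measure_pmf.emeasure_eq_measure)
  also have "\<dots> = (\<integral>\<^sup>+y. ennreal (rB y) * indicator {y. C' * rB y < pmf (WB x') y} y \<partial>count_space UNIV)"
    unfolding rB_def by (rule nn_integral_measure_pmf)
  also have "\<dots> \<le> (\<integral>\<^sup>+y. ennreal (1 / C') * ennreal (pmf (WB x') y) \<partial>count_space UNIV)"
  proof (intro nn_integral_mono)
    fix y show "ennreal (rB y) * indicator {y. C' * rB y < pmf (WB x') y} y \<le> ennreal (1 / C') * ennreal (pmf (WB x') y)"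
    proof (cases "C' * rB y < pmf (WB x') y")
      case True
      then have "rB y \<le> 1 / C' * pmf (WB x') y" using C by (simp add: field_simps)
      then show ?thesis using True C by (simp add: ennreal_mult[symmetric])
    qed simp
  qed
  also have "\<dots> = ennreal (1 / C') * (\<integral>\<^sup>+y. ennreal (pmf (WB x') y) \<partial>count_space UNIV)"
    by (simp add: nn_integral_cmult)
  also have "(\<integral>\<^sup>+y. ennreal (pmf (WB x') y) \<partial>count_space UNIV) = 1"
    by (simp add: nn_integral_pmf)
  finally show ?thesis using C by (simp add: ennreal_le_iff[symmetric] del: ennreal_le_iff)
qed

lemma cprime:
  assumes k: "k < N" and C: "C' > 0"
  shows "measure_pmf.expectation P (\<lambda>f. err f k) \<le>
     measure_pmf.expectation p (\<lambda>x. measure_pmf.prob (WB x) {y. pmf (WB x) y / rB y \<le> C'}) + real N / C'"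
proof -
  define J where "J = {..<N} - {k}"
  define A where "A x = {y. pmf (WB x) y \<le> C' * rB y}" for x
  define B where "B x' = {y. C' * rB y < pmf (WB x') y}" for x'
  have sub: "errset f k \<subseteq> A (f k) \<union> (\<Union>j\<in>J. B (f j))" for f
  proof
    fix y assume "y \<in> errset f k"
    then obtain j where j: "j \<in> J" "pmf (WB (f k)) y \<le> pmf (WB (f j)) y"
      unfolding errset_def J_def by auto
    show "y \<in> A (f k) \<union> (\<Union>j\<in>J. B (f j))"
    proof (cases "pmf (WB (f k)) y \<le> C' * rB y")
      case True then show ?thesis by (simp add: A_def)
    next
      case False then have "y \<in> B (f j)" using j by (simp add: B_def)
      then show ?thesis using j by blast
    qed
  qed
  have errle: "err f k \<le> measure_pmf.prob (WB (f k)) (A (f k)) + (\<Sum>j\<in>J. measure_pmf.prob (WB (f k)) (B (f j)))" for f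
  proof -
    have "err f k \<le> measure_pmf.prob (WB (f k)) (A (f k) \<union> (\<Union>j\<in>J. B (f j)))"
      unfolding err_def by (intro measure_pmf.finite_measure_mono sub) auto
    also have "\<dots> \<le> measure_pmf.prob (WB (f k)) (A (f k)) + measure_pmf.prob (WB (f k)) (\<Union>j\<in>J. B (f j))"
      by (rule measure_subadditive) (auto simp: measure_pmf.emeasure_eq_measure)
    also have "measure_pmf.prob (WB (f k)) (\<Union>j\<in>J. B (f j)) \<le> (\<Sum>j\<in>J. measure_pmf.prob (WB (f k)) (B (f j)))"
      by (rule measure_pmf.finite_measure_subadditive_finite) (auto simp: J_def)
    finally show ?thesis by simp
  qed
  have i1: "integrable (measure_pmf M) (\<lambda>f. measure_pmf.prob (WB (f k)) (A (f k)))" for M :: "(nat \<Rightarrow> 'x) pmf"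
    by (rule integrable_pmf_bounded[where B=1]) simp
  have i2: "integrable (measure_pmf M) (\<lambda>f. measure_pmf.prob (WB (f k)) (B (f j)))" for M :: "(nat \<Rightarrow> 'x) pmf" and j
    by (rule integrable_pmf_bounded[where B=1]) simp
  have "measure_pmf.expectation P (\<lambda>f. err f k) \<le>
      measure_pmf.expectation P (\<lambda>f. measure_pmf.prob (WB (f k)) (A (f k)) + (\<Sum>j\<in>J. measure_pmf.prob (WB (f k)) (B (f j))))"
    using i1 i2 by (intro integral_mono int_err errle) auto
  also have "\<dots> = measure_pmf.expectation P (\<lambda>f. measure_pmf.prob (WB (f k)) (A (f k)))
      + (\<Sum>j\<in>J. measure_pmf.expectation P (\<lambda>f. measure_pmf.prob (WB (f k)) (B (f j))))"
    using i1 i2 by (simp add: Bochner_Integration.integral_add Bochner_Integration.integral_sum)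
  also have "measure_pmf.expectation P (\<lambda>f. measure_pmf.prob (WB (f k)) (A (f k)))
      = measure_pmf.expectation p (\<lambda>x. measure_pmf.prob (WB x) (A x))"
    unfolding P_def using k by (intro exp_Pi_component) auto
  also have "\<dots> \<le> measure_pmf.expectation p (\<lambda>x. measure_pmf.prob (WB x) {y. pmf (WB x) y / rB y \<le> C'})"
  proof (intro integral_mono integrable_pmf_bounded[where B=1] measure_pmf.finite_measure_mono)
    fix x show "A x \<subseteq> {y. pmf (WB x) y / rB y \<le> C'}"
    proof
      fix y assume "y \<in> A x"
      then have h: "pmf (WB x) y \<le> C' * rB y" by (simp add: A_def)
      show "y \<in> {y. pmf (WB x) y / rB y \<le> C'}"
      proof (cases "rB y = 0")
        case True then show ?thesis using C by simp
      next
        case False then have "rB y > 0" by (simp add: rB_def order_less_le)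
        then show ?thesis using h by (simp add: divide_le_eq)
      qed
    qed
  qed auto
  also have "(\<Sum>j\<in>J. measure_pmf.expectation P (\<lambda>f. measure_pmf.prob (WB (f k)) (B (f j)))) \<le> (\<Sum>j\<in>J. 1 / C')"
  proof (intro sum_mono)
    fix j assume j: "j \<in> J"
    have jI: "j \<in> {..<N}" "k \<in> {..<N} - {j}" using j k by (auto simp: J_def)
    have "measure_pmf.expectation P (\<lambda>f. measure_pmf.prob (WB (f k)) (B (f j))) =
        measure_pmf.expectation p (\<lambda>x'. measure_pmf.expectation (Pi_pmf ({..<N} - {j}) d (\<lambda>_. p))
          (\<lambda>g. measure_pmf.prob (WB ((g(j:=x')) k)) (B ((g(j:=x')) j))))"
      unfolding P_def by (rule exp_Pi_split[where K=1]) (use jI in auto)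
    also have "\<dots> = measure_pmf.expectation p (\<lambda>x'. measure_pmf.expectation (Pi_pmf ({..<N} - {j}) d (\<lambda>_. p))
          (\<lambda>g. measure_pmf.prob (WB (g k)) (B x')))"
      using jI by (simp add: J_def)
    also have "\<dots> = measure_pmf.expectation p (\<lambda>x'. measure_pmf.expectation p (\<lambda>x. measure_pmf.prob (WB x) (B x')))"
      using jI by (subst exp_Pi_component) auto
    also have "\<dots> = measure_pmf.expectation p (\<lambda>x'. measure_pmf.prob (out_dist WB p) (B x'))"
      unfolding out_dist_def by (simp add: measure_bind_exp)
    also have "\<dots> \<le> measure_pmf.expectation p (\<lambda>x'. 1 / C')"
      using prob_rB_bound[OF C] unfolding B_def
      by (intro integral_mono) (auto simp: C intro!: integrable_pmf_bounded[where B=1])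
    also have "\<dots> = 1 / C'" by simp
    finally show "measure_pmf.expectation P (\<lambda>f. measure_pmf.prob (WB (f k)) (B (f j))) \<le> 1 / C'" .
  qed
  also have "(\<Sum>j\<in>J. 1 / C') \<le> real N / C'"
  proof -
    have "card J \<le> N" unfolding J_def using card_mono[of "{..<N}" "{..<N} - {k}"] by auto
    then show ?thesis using C by (simp add: divide_right_mono)
  qed
  finally show ?thesis by simp
qed

end

definition Qc :: "nat \<Rightarrow> (nat \<Rightarrow> 'x) \<Rightarrow> nat \<Rightarrow> 'x pmf" where
  "Qc L f i = map_pmf (\<lambda>l. f (i * L + l)) (pmf_of_set {..<L})"

lemma exp_Qc:
  fixes h :: "'x \<Rightarrow> real"
  assumes L: "L > 0"
  shows "measure_pmf.expectation (Qc L f i) h = (\<Sum>l<L. h (f (i * L + l))) / real L"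
  unfolding Qc_def using L by (subst integral_map_pmf, subst integral_pmf_of_set) auto

lemma pmf_out_Qc:
  assumes L: "L > 0"
  shows "pmf (out_dist W (Qc L f i)) z = (\<Sum>l<L. pmf (W (f (i * L + l))) z) / real L"
  unfolding out_dist_def pmf_bind by (rule exp_Qc[OF L])

lemma prob_out_Qc:
  assumes L: "L > 0"
  shows "measure_pmf.prob (out_dist W (Qc L f i)) S = (\<Sum>l<L. measure_pmf.prob (W (f (i * L + l))) S) / real L"
  unfolding out_dist_def measure_bind_exp by (rule exp_Qc[OF L])

lemma sum_blocks:
  fixes g :: "nat \<Rightarrow> 'a::comm_monoid_add"
  shows "(\<Sum>k<m * L. g k) = (\<Sum>i<m. \<Sum>l<L. g (i * L + l))"
proof (induction m)
  case 0 then show ?case by simp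
next
  case (Suc m)
  have "(\<Sum>k<Suc m * L. g k) = (\<Sum>k\<in>{0..<m * L}. g k) + (\<Sum>k\<in>{m * L..<m * L + L}. g k)"
    by (simp add: sum.atLeastLessThan_concat atLeast0LessThan[symmetric] add.commute)
  also have "(\<Sum>k\<in>{m * L..<m * L + L}. g k) = (\<Sum>l<L. g (m * L + l))"
    using sum.shift_bounds_nat_ivl[of g 0 "m * L" L] by (simp add: atLeast0LessThan add.commute)
  finally show ?case using Suc by (simp add: atLeast0LessThan)
qed

lemma block_index:
  fixes i M l L :: nat
  assumes i: "i < M" and l: "l < L"
  shows "i * L + l < M * L" and "(i * L + l) div L = i"
proof -
  have "i * L + l < i * L + L" using l by simp
  also have "\<dots> = Suc i * L" by simp
  also have "\<dots> \<le> M * L" using i by (intro mult_right_mono) auto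
  finally show "i * L + l < M * L" .
  show "(i * L + l) div L = i" using l by simp
qed

lemma KL_mix:
  fixes qs :: "nat \<Rightarrow> 'z::finite \<Rightarrow> real" and r :: "'z \<Rightarrow> real"
  assumes M: "M > 0" and q0: "\<And>i z. qs i z \<ge> 0" and qs: "\<And>i. i < M \<Longrightarrow> (\<Sum>z\<in>UNIV. qs i z) = 1"
    and supp: "\<And>i z. i < M \<Longrightarrow> qs i z > 0 \<Longrightarrow> r z > 0" and r0: "\<And>z. r z \<ge> 0" and rs: "(\<Sum>z\<in>UNIV. r z) = 1"
  shows "(\<Sum>i<M. KL_div (qs i) (\<lambda>z. (\<Sum>i<M. qs i z) / real M)) \<le> (\<Sum>i<M. KL_div (qs i) r)"
proof -
  define m where "m z = (\<Sum>i<M. qs i z) / real M" for z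
  have m0: "m z \<ge> 0" for z unfolding m_def by (intro divide_nonneg_nonneg sum_nonneg q0) auto
  have msum: "(\<Sum>z\<in>UNIV. m z) = 1"
  proof -
    have "(\<Sum>z\<in>UNIV. m z) = (\<Sum>i<M. \<Sum>z\<in>UNIV. qs i z) / real M"
      unfolding m_def by (simp add: sum_divide_distrib[symmetric] sum.swap[of _ UNIV])
    also have "\<dots> = 1" using M qs by simp
    finally show ?thesis .
  qed
  have msupp: "r z > 0" if "m z > 0" for z
  proof -
    have "(\<Sum>i<M. qs i z) > 0" using that M unfolding m_def by (simp add: zero_less_divide_iff)
    then obtain i where "i < M" "qs i z > 0"
      using sum_nonneg_eq_0_iff[of "{..<M}" "\<lambda>i. qs i z"] q0 by (metis finite_lessThan lessThan_iff order_less_le sum_nonneg)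
    then show ?thesis using supp by auto
  qed
  have pz: "(\<Sum>i<M. (if qs i z = 0 then 0 else qs i z * ln (qs i z / m z))) =
      (\<Sum>i<M. (if qs i z = 0 then 0 else qs i z * ln (qs i z / r z))) - real M * (if m z = 0 then 0 else m z * ln (m z / r z))" for z
  proof (cases "m z = 0")
    case True
    have "qs i z = 0" if "i < M" for i
    proof -
      have "(\<Sum>i<M. qs i z) = 0" using True M unfolding m_def by simp
      then show ?thesis using sum_nonneg_eq_0_iff[of "{..<M}" "\<lambda>i. qs i z"] q0 that by auto
    qed
    then show ?thesis using True by simp
  next
    case False
    then have mp: "m z > 0" using m0[of z] by simp
    have rp: "r z > 0" using msupp[OF mp] .
    have "(\<Sum>i<M. (if qs i z = 0 then 0 else qs i z * ln (qs i z / m z))) =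
        (\<Sum>i<M. (if qs i z = 0 then 0 else qs i z * ln (qs i z / r z)) - qs i z * ln (m z / r z))"
    proof (intro sum.cong refl)
      fix i
      show "(if qs i z = 0 then 0 else qs i z * ln (qs i z / m z)) =
          (if qs i z = 0 then 0 else qs i z * ln (qs i z / r z)) - qs i z * ln (m z / r z)"
      proof (cases "qs i z = 0")
        case False
        then have qp: "qs i z > 0" using q0[of i z] by simp
        have "ln (qs i z / m z) = ln (qs i z / r z) - ln (m z / r z)"
          using qp mp rp by (simp add: ln_div)
        then have "qs i z * ln (qs i z / m z) = qs i z * (ln (qs i z / r z) - ln (m z / r z))" by simp
        then show ?thesis using False by (simp add: right_diff_distrib)
      qed simp
    qed
    also have "\<dots> = (\<Sum>i<M. (if qs i z = 0 then 0 else qs i z * ln (qs i z / r z))) - (\<Sum>i<M. qs i z) * ln (m z / r z)"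
      by (simp add: sum_subtractf sum_distrib_right)
    also have "(\<Sum>i<M. qs i z) = real M * m z" using M unfolding m_def by simp
    finally show ?thesis using False by simp
  qed
  have "(\<Sum>i<M. KL_div (qs i) m) = (\<Sum>z\<in>UNIV. \<Sum>i<M. (if qs i z = 0 then 0 else qs i z * ln (qs i z / m z)))"
    unfolding KL_div_def by (rule sum.swap)
  also have "\<dots> = (\<Sum>z\<in>UNIV. (\<Sum>i<M. (if qs i z = 0 then 0 else qs i z * ln (qs i z / r z))) - real M * (if m z = 0 then 0 else m z * ln (m z / r z)))"
    using pz by simp
  also have "\<dots> = (\<Sum>z\<in>UNIV. \<Sum>i<M. (if qs i z = 0 then 0 else qs i z * ln (qs i z / r z))) - real M * KL_div m r"
    unfolding KL_div_def by (simp add: sum_subtractf sum_distrib_left)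
  also have "(\<Sum>z\<in>UNIV. \<Sum>i<M. (if qs i z = 0 then 0 else qs i z * ln (qs i z / r z))) = (\<Sum>i<M. KL_div (qs i) r)"
    unfolding KL_div_def by (rule sum.swap)
  finally have "(\<Sum>i<M. KL_div (qs i) m) = (\<Sum>i<M. KL_div (qs i) r) - real M * KL_div m r" .
  moreover have "KL_div m r \<ge> 0" by (rule gibbs) (use m0 msum r0 rs msupp in auto)
  ultimately show ?thesis using M unfolding m_def by simp
qed

lemma dE_le:
  fixes qs :: "nat \<Rightarrow> 'z::finite \<Rightarrow> real" and r :: "'z \<Rightarrow> real"
  shows "(\<Sum>i<M. \<Sum>j<M. if i \<noteq> j then l1_dist (qs i) (qs j) else 0) / (real M * (real M - 1))
     \<le> 2 * (\<Sum>i<M. l1_dist (qs i) r) / real M"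
proof (cases "M \<le> 1")
  case True
  then have "M = 0 \<or> M = 1" by auto
  then show ?thesis by (auto simp: l1_dist_def intro: sum_nonneg)
next
  case False
  then have M2: "real M - 1 > 0" "real M > 0" by auto
  define a where "a i = l1_dist (qs i) r" for i
  have tri: "l1_dist (qs i) (qs j) \<le> a i + a j" for i j
    unfolding a_def l1_dist_def sum.distrib[symmetric]
    by (intro sum_mono) arith
  have "(\<Sum>i<M. \<Sum>j<M. if i \<noteq> j then l1_dist (qs i) (qs j) else 0) \<le>
      (\<Sum>i<M. \<Sum>j<M. if i \<noteq> j then a i + a j else 0)"
    by (intro sum_mono) (auto simp: tri)
  also have "\<dots> = (\<Sum>i<M. (\<Sum>j<M. a i + a j) - 2 * a i)"
  proof (intro sum.cong refl)
    fix i assume i: "i \<in> {..<M}"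
    have "(\<Sum>j<M. a i + a j) = (a i + a i) + (\<Sum>j\<in>{..<M}-{i}. a i + a j)"
      using i by (subst sum.remove[of _ i]) auto
    moreover have "(\<Sum>j<M. if i \<noteq> j then a i + a j else 0) = (\<Sum>j\<in>{..<M}-{i}. a i + a j)"
      using i by (subst sum.remove[of _ i]) (auto intro!: sum.cong)
    ultimately show "(\<Sum>j<M. if i \<noteq> j then a i + a j else 0) = (\<Sum>j<M. a i + a j) - 2 * a i" by simp
  qed
  also have "\<dots> = 2 * (real M - 1) * (\<Sum>i<M. a i)"
    by (simp add: sum.distrib sum_subtractf sum_distrib_left[symmetric] sum_distrib_right[symmetric] algebra_simps)
  finally have "(\<Sum>i<M. \<Sum>j<M. if i \<noteq> j then l1_dist (qs i) (qs j) else 0) / (real M * (real M - 1))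
      \<le> 2 * (real M - 1) * (\<Sum>i<M. a i) / (real M * (real M - 1))"
    using M2 by (intro divide_right_mono) auto
  also have "\<dots> = 2 * (\<Sum>i<M. a i) / real M" using M2 by (simp add: field_simps)
  finally show ?thesis unfolding a_def .
qed

lemma ex_argmax_nat:
  fixes h :: "nat \<Rightarrow> real" assumes "N > 0"
  shows "\<exists>j<N. \<forall>k<N. h k \<le> h j"
proof -
  have fin: "finite (h ` {..<N})" and ne: "h ` {..<N} \<noteq> {}" using assms by auto
  obtain j where j: "j < N" "h j = Max (h ` {..<N})" using Max_in[OF fin ne] by auto
  have "\<forall>k<N. h k \<le> h j" using j Max_ge[OF fin] by auto
  then show ?thesis using j by blast
qed

context bob begin

lemma epsB_le:
  assumes NML: "N = M * L" and L: "L > 0"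
  shows "eps_B WB M (Qc L f) (\<lambda>i. {y. (LEAST j. j < N \<and> (\<forall>k<N. pmf (WB (f k)) y \<le> pmf (WB (f j)) y)) div L = i})
     \<le> (\<Sum>k<N. err f k) / real N"
proof -
  define dec where "dec y = (LEAST j. j < N \<and> (\<forall>k<N. pmf (WB (f k)) y \<le> pmf (WB (f j)) y))" for y
  have dec: "dec y < N \<and> (\<forall>k<N. pmf (WB (f k)) y \<le> pmf (WB (f (dec y))) y)" for y
    unfolding dec_def by (rule LeastI_ex) (rule ex_argmax_nat[OF N])
  have M: "M > 0" using N NML by simp
  have sub: "- {y. dec y div L = i} \<subseteq> errset f (i * L + l)" if i: "i < M" and l: "l < L" for i l
  proof
    fix y assume y: "y \<in> - {y. dec y div L = i}"
    have "dec y \<noteq> i * L + l" using y block_index(2)[OF i l] by auto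
    moreover have "i * L + l < N" using block_index(1)[OF i l] NML by simp
    ultimately show "y \<in> errset f (i * L + l)"
      unfolding errset_def using dec[of y] by auto
  qed
  have "eps_B WB M (Qc L f) (\<lambda>i. {y. dec y div L = i}) =
      (\<Sum>i<M. (\<Sum>l<L. measure_pmf.prob (WB (f (i * L + l))) (- {y. dec y div L = i})) / real L) / real M"
    unfolding eps_B_def by (simp add: prob_out_Qc[OF L])
  also have "\<dots> \<le> (\<Sum>i<M. (\<Sum>l<L. err f (i * L + l)) / real L) / real M"
    unfolding err_def using sub
    by (intro divide_right_mono sum_mono measure_pmf.finite_measure_mono) auto
  also have "\<dots> = (\<Sum>k<N. err f k) / real N"
    unfolding NML sum_blocks using L M by (simp add: sum_divide_distrib[symmetric])
  finally show ?thesis unfolding dec_def .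
qed

end

lemma avg_le_N:
  fixes a :: "nat \<Rightarrow> real"
  assumes N: "N > 0" and h: "\<And>k. k < N \<Longrightarrow> a k \<le> b"
  shows "(\<Sum>k<N. a k) / real N \<le> b"
proof -
  have "(\<Sum>k<N. a k) \<le> (\<Sum>k<N. b)" using h by (intro sum_mono) auto
  then show ?thesis using N by (simp add: field_simps)
qed

theorem theorem3:
  fixes WB :: "'x::countable \<Rightarrow> 'y::countable pmf"
    and WE :: "'x \<Rightarrow> 'z::finite pmf"
    and L M :: nat and C C' :: real and p :: "'x pmf"
  assumes "L > 0" and "M > 0" and "C > 0" and "C' > 0"
  shows "\<exists>(Q :: nat \<Rightarrow> 'x pmf) (D :: nat \<Rightarrow> 'y set).
     is_wiretap_code M Q D \<and>
     (\<forall>s\<in>{0..1}. ennreal (eps_B WB M Q D)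
        \<le> 3 * ennreal ((real M * real L) powr s) * gallager_sum s WB p) \<and>
     eps_B WB M Q D \<le> 3 * (measure_pmf.expectation p
        (\<lambda>x. measure_pmf.prob (WB x)
           {y. pmf (WB x) y / pmf (out_dist WB p) y \<le> C'}) + real M * real L / C') \<and>
     I_E WE M Q \<le> 3 * (eta (delta p WE C) + delta p WE C * ln (real CARD('z))
        + delta' p WE C / real L) \<and>
     (\<forall>t\<in>{-1/2..<0}. I_E WE M Q
        \<le> 3 * (ln (1 + real L powr t * exp (phi t WE p)) / (- t))) \<and>
     d_E WE M Q \<le> 6 * (2 * delta p WE C + sqrt (delta' p WE C / real L))"
proof -
  define N where "N = M * L"
  have N: "N > 0" using assms by (simp add: N_def)
  have Lp: "L > 0" using assms by simp
  have Mp: "M > 0" using assms by simp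
  interpret Bo: bob WB p N undefined by unfold_locales (rule N)
  define P where "P = Pi_pmf {..<N} undefined (\<lambda>_. p)"
  have BoP: "Bo.P = P" unfolding Bo.P_def P_def ..
  define dec where "dec f y = (LEAST j. j < N \<and> (\<forall>k<N. pmf (WB (f k)) y \<le> pmf (WB (f j)) y))" for f y
  define D where "D f i = {y. dec f y div L = i}" for f i
  define rE where "rE = pmf (out_dist WE p)"
  define qE where "qE f i = pmf (out_dist WE (Qc L f i))" for f i
  define GB where "GB f = (\<Sum>k<N. Bo.err f k) / real N" for f
  define GI where "GI f = (\<Sum>i<M. KL_div (qE f i) rE) / real M" for f
  define Gd where "Gd f = 2 * (\<Sum>i<M. l1_dist (qE f i) rE) / real M" for f
  define KB where "KB = (\<Sum>z\<in>(UNIV::'z set). real L + \<bar>ln (rE z)\<bar>)"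
  define dl where "dl = delta p WE C"
  define dl' where "dl' = delta' p WE C"
  have eve: "measure_pmf.expectation P (\<lambda>f. KL_div (qE f i) rE) \<le> eta dl + dl * ln (real CARD('z)) + dl' / real L \<and>
     (\<forall>t\<in>{-1/2..<0}. measure_pmf.expectation P (\<lambda>f. KL_div (qE f i) rE) \<le> ln (1 + real L powr t * exp (phi t WE p)) / (- t)) \<and>
     measure_pmf.expectation P (\<lambda>f. l1_dist (qE f i) rE) \<le> 2 * dl + sqrt (dl' / real L) \<and>
     (\<forall>f\<in>set_pmf P. KL_div (qE f i) rE \<ge> 0) \<and> (\<forall>f. \<bar>KL_div (qE f i) rE\<bar> \<le> KB) \<and>
     (\<forall>f\<in>set_pmf P. \<forall>z. qE f i z > 0 \<longrightarrow> rE z > 0)" if i: "i < M" for i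
  proof -
    interpret B: blk WE p L "{..<N}" "\<lambda>l. i * L + l" undefined
      by unfold_locales (auto simp: inj_on_def N_def Lp intro: block_index(1)[OF i])
    have BP: "B.P = P" unfolding B.P_def P_def ..
    have Br: "B.r = rE" unfolding B.r_def[abs_def] rE_def ..
    have Bq: "B.q f = qE f i" for f
      unfolding B.q_def[abs_def] qE_def using pmf_out_Qc[OF Lp, of WE f i] by (simp add: fun_eq_iff)
    have KBeq: "KB = (\<Sum>z\<in>UNIV. real L + \<bar>ln (B.r z)\<bar>)" unfolding KB_def Br ..
    show ?thesis
      unfolding dl_def dl'_def
      using B.KL_exp_bound[of C] B.KL_t_bound B.l1_bound[of C] B.KL_nonneg B.KL_bounded B.q_supp
      unfolding BP Br Bq KBeq by auto
  qed
  have avg_le: "(\<Sum>i<M. a i) / real M \<le> b" if "\<And>i. i < M \<Longrightarrow> a i \<le> b" for a :: "nat \<Rightarrow> real" and b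
  proof -
    have "(\<Sum>i<M. a i) \<le> (\<Sum>i<M. b)" using that by (intro sum_mono) auto
    then show ?thesis using Mp by (simp add: field_simps)
  qed
  have intKL: "integrable (measure_pmf P) (\<lambda>f. KL_div (qE f i) rE)" if "i < M" for i
    by (rule integrable_pmf_bounded[where B=KB]) (use eve[OF that] in blast)
  have intl1: "integrable (measure_pmf P) (\<lambda>f. l1_dist (qE f i) rE)" for i
  proof (rule integrable_pmf_bounded[where B="real CARD('z) * 2"])
    fix f
    have "\<bar>l1_dist (qE f i) rE\<bar> = l1_dist (qE f i) rE" unfolding l1_dist_def by (simp add: sum_nonneg)
    also have "\<dots> \<le> (\<Sum>z\<in>(UNIV::'z set). 2)" unfolding l1_dist_def
    proof (intro sum_mono)
      fix z
      have "0 \<le> qE f i z" "qE f i z \<le> 1" "0 \<le> rE z" "rE z \<le> 1" by (simp_all add: qE_def rE_def pmf_le_1)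
      then show "\<bar>qE f i z - rE z\<bar> \<le> 2" by arith
    qed
    finally show "\<bar>l1_dist (qE f i) rE\<bar> \<le> real CARD('z) * 2" by simp
  qed
  have intGB: "integrable (measure_pmf P) GB" unfolding GB_def using Bo.int_err by auto
  have intGI: "integrable (measure_pmf P) GI" unfolding GI_def using intKL
    by (intro integrable_divide Bochner_Integration.integrable_sum) auto
  have intGd: "integrable (measure_pmf P) Gd" unfolding Gd_def using intl1
    by (intro integrable_divide integrable_mult_right Bochner_Integration.integrable_sum) auto
  have EGB: "measure_pmf.expectation P GB = (\<Sum>k<N. measure_pmf.expectation P (\<lambda>f. Bo.err f k)) / real N"
    unfolding GB_def using Bo.int_err by (simp add: Bochner_Integration.integral_sum)
  have EGI: "measure_pmf.expectation P GI = (\<Sum>i<M. measure_pmf.expectation P (\<lambda>f. KL_div (qE f i) rE)) / real M"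
    unfolding GI_def using intKL by (simp add: Bochner_Integration.integral_sum)
  have EGd: "measure_pmf.expectation P Gd = 2 * (\<Sum>i<M. measure_pmf.expectation P (\<lambda>f. l1_dist (qE f i) rE)) / real M"
    unfolding Gd_def using intl1 by (simp add: Bochner_Integration.integral_sum)
  have GB0: "GB f \<ge> 0" for f unfolding GB_def by (intro divide_nonneg_nonneg sum_nonneg Bo.err_nonneg) auto
  have GI0: "GI f \<ge> 0" if "f \<in> set_pmf P" for f
    unfolding GI_def using eve that by (intro divide_nonneg_nonneg sum_nonneg) auto
  have Gd0: "Gd f \<ge> 0" for f unfolding Gd_def l1_dist_def by (intro divide_nonneg_nonneg mult_nonneg_nonneg sum_nonneg) auto
  obtain f0 where f0: "f0 \<in> set_pmf P" and f0B: "GB f0 \<le> 3 * measure_pmf.expectation P GB"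
    and f0I: "GI f0 \<le> 3 * measure_pmf.expectation P GI" and f0d: "Gd f0 \<le> 3 * measure_pmf.expectation P Gd"
    using select3[OF intGB intGI intGd GB0 GI0 Gd0] by blast
  define Q where "Q = Qc L f0"
  define DD where "DD = D f0"
  have code: "is_wiretap_code M Q DD"
    unfolding is_wiretap_code_def disjoint_family_on_def DD_def D_def by auto
  have epsGB: "eps_B WB M Q DD \<le> GB f0"
    unfolding Q_def DD_def D_def dec_def GB_def using Bo.epsB_le[OF N_def Lp, of f0] by simp
  have IGI: "I_E WE M Q \<le> GI f0"
  proof -
    have "(\<Sum>i<M. KL_div (qE f0 i) (\<lambda>z. (\<Sum>i<M. qE f0 i z) / real M)) \<le> (\<Sum>i<M. KL_div (qE f0 i) rE)"
    proof (rule KL_mix[OF Mp])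
      show "\<And>i z. 0 \<le> qE f0 i z" by (simp add: qE_def)
      show "\<And>i. i < M \<Longrightarrow> (\<Sum>z\<in>UNIV. qE f0 i z) = 1" unfolding qE_def by (rule sum_pmf_eq_1) auto
      show "\<And>i z. i < M \<Longrightarrow> 0 < qE f0 i z \<Longrightarrow> 0 < rE z" using eve f0 by blast
      show "\<And>z. 0 \<le> rE z" by (simp add: rE_def)
      show "(\<Sum>z\<in>UNIV. rE z) = 1" unfolding rE_def by (rule sum_pmf_eq_1) auto
    qed
    then show ?thesis unfolding I_E_def GI_def code_out_mix_def Q_def qE_def[abs_def]
      using Mp by (simp add: divide_right_mono)
  qed
  have dGd: "d_E WE M Q \<le> Gd f0"
    unfolding d_E_def Gd_def Q_def using dE_le[where qs="\<lambda>i. pmf (out_dist WE (Qc L f0 i))" and r=rE and M=M] by (simp add: qE_def)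
  have EGB_gal: "ennreal (measure_pmf.expectation P GB) \<le> ennreal (real N powr s) * gallager_sum s WB p"
    if s: "s \<in> {0..1}" for s
  proof -
    obtain k where k: "k < N" and kmax: "\<forall>j<N. measure_pmf.expectation P (\<lambda>f. Bo.err f j) \<le> measure_pmf.expectation P (\<lambda>f. Bo.err f k)"
      using ex_argmax_nat[OF N, of "\<lambda>j. measure_pmf.expectation P (\<lambda>f. Bo.err f j)"] by blast
    have "measure_pmf.expectation P GB \<le> measure_pmf.expectation P (\<lambda>f. Bo.err f k)"
    proof -
      have "(\<Sum>j<N. measure_pmf.expectation P (\<lambda>f. Bo.err f j)) \<le> (\<Sum>j<N. measure_pmf.expectation P (\<lambda>f. Bo.err f k))"
        using kmax by (intro sum_mono) auto
      then show ?thesis unfolding EGB using N by (simp add: field_simps)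
    qed
    then have "ennreal (measure_pmf.expectation P GB) \<le> ennreal (measure_pmf.expectation P (\<lambda>f. Bo.err f k))"
      by (rule ennreal_leI)
    also have "\<dots> \<le> ennreal (real N powr s) * gallager_sum s WB p"
      using Bo.gal[OF k] s unfolding BoP by auto
    finally show ?thesis .
  qed
  have EGB_c: "measure_pmf.expectation P GB \<le>
      measure_pmf.expectation p (\<lambda>x. measure_pmf.prob (WB x) {y. pmf (WB x) y / pmf (out_dist WB p) y \<le> C'}) + real M * real L / C'"
  proof -
    have "measure_pmf.expectation P GB \<le>
      measure_pmf.expectation p (\<lambda>x. measure_pmf.prob (WB x) {y. pmf (WB x) y / pmf (out_dist WB p) y \<le> C'}) + real N / C'"
      unfolding EGB
    proof (rule avg_le_N)
      show "\<And>k. k < N \<Longrightarrow> measure_pmf.expectation P (\<lambda>f. Bo.err f k) \<le> measure_pmf.expectation p (\<lambda>x. measure_pmf.prob (WB x) {y. pmf (WB x) y / pmf (out_dist WB p) y \<le> C'}) + real N / C'"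
        using Bo.cprime assms(4) unfolding BoP Bo.rB_def by auto
    qed (rule N)
    then show ?thesis by (simp add: N_def)
  qed
  have EGI_d: "measure_pmf.expectation P GI \<le> eta dl + dl * ln (real CARD('z)) + dl' / real L"
    unfolding EGI by (rule avg_le) (use eve in auto)
  have EGI_t: "measure_pmf.expectation P GI \<le> ln (1 + real L powr t * exp (phi t WE p)) / (- t)"
    if t: "t \<in> {-1/2..<0}" for t
    unfolding EGI by (rule avg_le) (use eve t in auto)
  have EGd_b: "measure_pmf.expectation P Gd \<le> 2 * (2 * dl + sqrt (dl' / real L))"
  proof -
    have "(\<Sum>i<M. measure_pmf.expectation P (\<lambda>f. l1_dist (qE f i) rE)) / real M \<le> 2 * dl + sqrt (dl' / real L)"
      by (rule avg_le) (use eve in auto)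
    then show ?thesis unfolding EGd by simp
  qed
  have EGB0: "measure_pmf.expectation P GB \<ge> 0" by (intro integral_nonneg_AE AE_pmfI GB0)
  show ?thesis
  proof (intro exI conjI ballI)
    show "is_wiretap_code M Q DD" by (rule code)
  next
    fix s :: real assume s: "s \<in> {0..1}"
    have "ennreal (eps_B WB M Q DD) \<le> ennreal (3 * measure_pmf.expectation P GB)"
      using epsGB f0B by (intro ennreal_leI) simp
    also have "\<dots> = 3 * ennreal (measure_pmf.expectation P GB)" using EGB0 by (simp add: ennreal_mult)
    also have "\<dots> \<le> 3 * (ennreal (real N powr s) * gallager_sum s WB p)"
      by (intro mult_left_mono EGB_gal s) auto
    finally show "ennreal (eps_B WB M Q DD) \<le> 3 * ennreal ((real M * real L) powr s) * gallager_sum s WB p"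
      by (simp add: N_def mult.assoc)
  next
    show "eps_B WB M Q DD \<le> 3 * (measure_pmf.expectation p (\<lambda>x. measure_pmf.prob (WB x) {y. pmf (WB x) y / pmf (out_dist WB p) y \<le> C'}) + real M * real L / C')"
      using order_trans[OF epsGB order_trans[OF f0B mult_left_mono[OF EGB_c]]] by simp
  next
    show "I_E WE M Q \<le> 3 * (eta (delta p WE C) + delta p WE C * ln (real CARD('z)) + delta' p WE C / real L)"
      using order_trans[OF IGI order_trans[OF f0I mult_left_mono[OF EGI_d]]] unfolding dl_def dl'_def by simp
  next
    fix t :: real assume t: "t \<in> {-1/2..<0}"
    show "I_E WE M Q \<le> 3 * (ln (1 + real L powr t * exp (phi t WE p)) / (- t))"
      using order_trans[OF IGI order_trans[OF f0I mult_left_mono[OF EGI_t[OF t]]]] by simp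
  next
    show "d_E WE M Q \<le> 6 * (2 * delta p WE C + sqrt (delta' p WE C / real L))"
      using order_trans[OF dGd order_trans[OF f0d mult_left_mono[OF EGd_b]]] unfolding dl_def dl'_def by simp
  qed
qed

end
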